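(* Let $A$ be a finite set and $C$ a natural number. On a probability space let $(x_i)_{i\ge1}$ be random variables taking values in $A$ and, for each prime $p$, let $y_p$ be a random variable in $\mathbb{Z}/p\mathbb{Z}$. Assume: (i) for every $P$, the vector $(y_p)_{p\le P}$ is uniformly distributed in $\prod_{p\le P}\mathbb{Z}/p\mathbb{Z}$; (ii) for all $i,m\in\mathbb{N}$, $(x_1,\dots,x_m)$ and $(x_{i+1},\dots,x_{i+m})$ have the same distribution; (iii) for every $P$, every $b\in\prod_{p\le P}\mathbb{Z}/p\mathbb{Z}$, all $i,m$ and every $S\subset A^m$, $\mathbb{P}((x_1,\dots,x_m)\in S\mid (y_p)_{p\le P}=b)=\mathbb{P}((x_{i+1},\dots,x_{i+m})\in S\mid (y_p)_{p\le P}=b+i)$, where $b+i$ adds $i$ in every coordinate. For each power of two $P$ put $X_P=(x_1,\dots,x_{CP})$ and $Y_P=(y_p)_{P/2<p\le P}$; for each prime $P/2<p\le P$ let $f_{P,p}\colon A^{CP}\times\mathbb{Z}/p\mathbb{Z}\to\mathbb{C}$ be $1$-bounded and set $f_P(X_P,Y_P)=\mathbb{E}_{P/2<p\le P}f_{P,p}(X_P,y_p)$. Let $W_P$ be a random variable with the same distribution as $Y_P$ and independent of $X_P$. Then \[ \liminf_{P\to\infty,\ P\text{ a power of }2}\ \mathbb{E}\big|f_P(X_P,Y_P)-f_P(X_P,W_P)\big|=0 . \]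
   Context: $p$ always denotes a prime, and $\mathbb{E}_{P/2<p\le P}$ is the uniform average over primes in $(P/2,P]$; for $W_P=(w_p)$, $f_P(X_P,W_P)=\mathbb{E}_{P/2<p\le P}f_{P,p}(X_P,w_p)$. *)

theory Defs
  imports "HOL-Probability.Probability" "HOL-Computational_Algebra.Primes"
begin

definition cprob :: "'w measure \<Rightarrow> ('w \<Rightarrow> bool) \<Rightarrow> ('w \<Rightarrow> bool) \<Rightarrow> real" where
  "cprob M E F = measure M {\<omega>\<in>space M. E \<omega> \<and> F \<omega>} / measure M {\<omega>\<in>space M. F \<omega>}"

definition primes_between :: "nat \<Rightarrow> nat set" where
  "primes_between P = {p. prime p \<and> P < 2 * p \<and> p \<le> P}"

definition primes_upto :: "nat \<Rightarrow> nat set" where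
  "primes_upto P = {p. prime p \<and> p \<le> P}"

definition window :: "(nat \<Rightarrow> 'w \<Rightarrow> 'a) \<Rightarrow> nat \<Rightarrow> nat \<Rightarrow> 'w \<Rightarrow> 'a list" where
  "window x i m \<omega> = map (\<lambda>j. x j \<omega>) [i+1..<i+m+1]"

definition fP :: "(nat \<Rightarrow> nat \<Rightarrow> 'a list \<Rightarrow> nat \<Rightarrow> complex) \<Rightarrow> nat \<Rightarrow> 'a list \<Rightarrow> (nat \<Rightarrow> nat) \<Rightarrow> complex" where
  "fP f P X w = (\<Sum>p\<in>primes_between P. f P p X (w p)) / of_nat (card (primes_between P))"

end

theory Submission
  imports Defs
begin

lemma a_ln_ineq:
  fixes a b :: real
  assumes "0 < a" "0 < b"
  shows "a - b \<le> a * ln (a / b)"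
proof -
  have "ln (b / a) \<le> b / a - 1" using assms by (intro ln_le_minus_one) simp
  hence "a * ln (b / a) \<le> a * (b / a - 1)" using assms by (intro mult_left_mono) auto
  also have "\<dots> = b - a" using assms by (simp add: field_simps)
  finally have "a * ln (b / a) \<le> b - a" .
  moreover have "ln (a / b) = - ln (b / a)" using assms by (simp add: ln_div)
  ultimately show ?thesis by simp
qed

lemma gibbs:
  fixes v s :: "'k \<Rightarrow> real"
  assumes "finite K" "\<And>k. k \<in> K \<Longrightarrow> 0 \<le> v k" "\<And>k. k \<in> K \<Longrightarrow> 0 \<le> s k"
    "\<And>k. k \<in> K \<Longrightarrow> 0 < v k \<Longrightarrow> 0 < s k"
  shows "sum v K - sum s K \<le> (\<Sum>k\<in>K. v k * ln (v k / s k))"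
proof -
  have "sum v K - sum s K = (\<Sum>k\<in>K. v k - s k)" by (simp add: sum_subtractf)
  also have "\<dots> \<le> (\<Sum>k\<in>K. v k * ln (v k / s k))"
  proof (rule sum_mono)
    fix k assume k: "k \<in> K"
    show "v k - s k \<le> v k * ln (v k / s k)"
    proof (cases "v k = 0")
      case True thus ?thesis using assms(3)[OF k] by simp
    next
      case False
      hence "0 < v k" using assms(2)[OF k] by simp
      thus ?thesis using a_ln_ineq assms(4)[OF k] by blast
    qed
  qed
  finally show ?thesis .
qed

lemma ent_subadd:
  fixes r :: "'u \<Rightarrow> 'v \<Rightarrow> real"
  assumes U: "finite U" and V: "finite V" and nn: "\<And>u v. u \<in> U \<Longrightarrow> v \<in> V \<Longrightarrow> 0 \<le> r u v"
    and tot: "(\<Sum>u\<in>U. \<Sum>v\<in>V. r u v) = 1"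
  shows "- (\<Sum>u\<in>U. \<Sum>v\<in>V. r u v * ln (r u v))
     \<le> - (\<Sum>u\<in>U. (\<Sum>v\<in>V. r u v) * ln (\<Sum>v\<in>V. r u v))
        - (\<Sum>v\<in>V. (\<Sum>u\<in>U. r u v) * ln (\<Sum>u\<in>U. r u v))"
proof -
  define r1 where "r1 u = (\<Sum>v\<in>V. r u v)" for u
  define r2 where "r2 v = (\<Sum>u\<in>U. r u v)" for v
  have r1ge: "r u v \<le> r1 u" if "u \<in> U" "v \<in> V" for u v
    unfolding r1_def using that V nn by (intro member_le_sum) auto
  have r2ge: "r u v \<le> r2 v" if "u \<in> U" "v \<in> V" for u v
    unfolding r2_def using that U nn by (intro member_le_sum[where f = "\<lambda>u. r u v"]) auto
  have r1nn: "0 \<le> r1 u" if "u \<in> U" for u unfolding r1_def using nn that by (intro sum_nonneg) auto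
  have r2nn: "0 \<le> r2 v" if "v \<in> V" for v unfolding r2_def using nn that by (intro sum_nonneg) auto
  have s1: "sum r1 U = 1" using tot by (simp add: r1_def)
  have s2: "sum r2 V = 1" using tot by (simp add: r2_def sum.swap[of _ U V])
  let ?K = "U \<times> V"
  have g: "sum (\<lambda>(u,v). r u v) ?K - sum (\<lambda>(u,v). r1 u * r2 v) ?K
      \<le> (\<Sum>k\<in>?K. (\<lambda>(u,v). r u v) k * ln ((\<lambda>(u,v). r u v) k / (\<lambda>(u,v). r1 u * r2 v) k))"
  proof (rule gibbs)
    show "finite ?K" using U V by simp
  next
    fix k assume "k \<in> ?K" thus "0 \<le> (\<lambda>(u,v). r u v) k" using nn by auto
  next
    fix k assume "k \<in> ?K" thus "0 \<le> (\<lambda>(u,v). r1 u * r2 v) k" using r1nn r2nn by auto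
  next
    fix k assume k: "k \<in> ?K" "0 < (\<lambda>(u,v). r u v) k"
    then obtain u v where uv: "k = (u,v)" "u \<in> U" "v \<in> V" by auto
    have "0 < r1 u" "0 < r2 v" using r1ge[OF uv(2,3)] r2ge[OF uv(2,3)] k uv by auto
    thus "0 < (\<lambda>(u,v). r1 u * r2 v) k" using uv by simp
  qed
  have e1: "sum (\<lambda>(u,v). r u v) ?K = 1" using tot by (simp add: sum.cartesian_product)
  have e2: "sum (\<lambda>(u,v). r1 u * r2 v) ?K = 1"
    using s1 s2 by (simp add: sum.cartesian_product[symmetric] sum_product[symmetric])
  have tm: "r u v * ln (r u v / (r1 u * r2 v)) = r u v * ln (r u v) - r u v * ln (r1 u) - r u v * ln (r2 v)"
    if "u \<in> U" "v \<in> V" for u v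
  proof (cases "r u v = 0")
    case True thus ?thesis by simp
  next
    case False
    hence pos: "0 < r u v" using nn[OF that] by simp
    hence "0 < r1 u" "0 < r2 v" using r1ge[OF that] r2ge[OF that] by auto
    thus ?thesis using pos by (simp add: ln_div ln_mult algebra_simps)
  qed
  have "0 \<le> (\<Sum>k\<in>?K. (\<lambda>(u,v). r u v * ln (r u v / (r1 u * r2 v))) k)"
    using g e1 e2 by (simp add: case_prod_unfold)
  also have "\<dots> = (\<Sum>u\<in>U. \<Sum>v\<in>V. r u v * ln (r u v / (r1 u * r2 v)))"
    by (simp add: sum.cartesian_product)
  also have "\<dots> = (\<Sum>u\<in>U. \<Sum>v\<in>V. r u v * ln (r u v)) - (\<Sum>u\<in>U. \<Sum>v\<in>V. r u v * ln (r1 u))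
        - (\<Sum>u\<in>U. \<Sum>v\<in>V. r u v * ln (r2 v))"
    by (simp add: tm sum_subtractf)
  also have "(\<Sum>u\<in>U. \<Sum>v\<in>V. r u v * ln (r1 u)) = (\<Sum>u\<in>U. r1 u * ln (r1 u))"
    by (simp add: r1_def sum_distrib_right)
  also have "(\<Sum>u\<in>U. \<Sum>v\<in>V. r u v * ln (r2 v)) = (\<Sum>v\<in>V. r2 v * ln (r2 v))"
    by (simp add: r2_def sum_distrib_right sum.swap[of _ U V])
  finally show ?thesis by (simp add: r1_def r2_def)
qed

lemma dv_ineq:
  fixes v p :: "'k \<Rightarrow> real"
  assumes K: "finite K" and vnn: "\<And>k. k \<in> K \<Longrightarrow> 0 \<le> v k" and pnn: "\<And>k. k \<in> K \<Longrightarrow> 0 \<le> p k"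
    and supp: "\<And>k. k \<in> K \<Longrightarrow> 0 < v k \<Longrightarrow> 0 < p k"
    and sv: "sum v K = 1" and sp: "sum p K \<le> 1"
    and rho: "0 < \<rho>" and pE: "(\<Sum>k\<in>K. if E k then p k else 0) \<le> \<rho>"
  shows "(\<Sum>k\<in>K. if E k then v k else 0) * ln (1 / \<rho>) \<le> (\<Sum>k\<in>K. v k * ln (v k / p k)) + 1"
proof -
  define s where "s k = p k * (if E k then 1 / \<rho> else 1)" for k
  have g: "sum v K - sum s K \<le> (\<Sum>k\<in>K. v k * ln (v k / s k))"
    using K vnn supp pnn rho by (intro gibbs) (auto simp: s_def)
  have "sum s K = (\<Sum>k\<in>K. if E k then p k else 0) / \<rho> + (\<Sum>k\<in>K. if E k then 0 else p k)"
    by (simp add: s_def sum.distrib[symmetric] sum_divide_distrib if_distrib cong: if_cong)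
  also have "\<dots> \<le> 1 + 1"
  proof (rule add_mono)
    show "(\<Sum>k\<in>K. if E k then p k else 0) / \<rho> \<le> 1" using pE rho by simp
    have "(\<Sum>k\<in>K. if E k then 0 else p k) \<le> sum p K" using pnn by (intro sum_mono) auto
    thus "(\<Sum>k\<in>K. if E k then 0 else p k) \<le> 1" using sp by simp
  qed
  finally have ss: "sum s K \<le> 2" by simp
  have tm: "v k * ln (v k / s k) = v k * ln (v k / p k) - (if E k then v k else 0) * ln (1 / \<rho>)"
    if "k \<in> K" for k
  proof (cases "v k = 0")
    case True thus ?thesis by simp
  next
    case False
    hence pos: "0 < v k" using vnn[OF that] by simp
    hence pp: "0 < p k" using supp[OF that] by simp
    show ?thesis using pos pp rho by (simp add: s_def ln_div ln_mult algebra_simps)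
  qed
  have "(\<Sum>k\<in>K. v k * ln (v k / s k)) = (\<Sum>k\<in>K. v k * ln (v k / p k)) - (\<Sum>k\<in>K. if E k then v k else 0) * ln (1 / \<rho>)"
    by (simp add: tm sum_subtractf sum_distrib_right)
  thus ?thesis using g ss sv by linarith
qed


lemma exp_quad_bound:
  fixes y :: real
  assumes "\<bar>y\<bar> \<le> 1"
  shows "exp y \<le> 1 + y + y\<^sup>2"
proof (cases "0 \<le> y")
  case True thus ?thesis using assms exp_bound by auto
next
  case False
  let ?h = "\<lambda>z::real. 1 + z + z\<^sup>2 - exp z"
  have "?h y \<ge> ?h 0"
  proof (rule DERIV_nonpos_imp_nonincreasing[of y 0 ?h])
    show "y \<le> 0" using False by simp
  next
    fix z :: real assume z: "y \<le> z" "z \<le> 0"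
    have "DERIV ?h z :> 1 + 2 * z - exp z"
      by (auto intro!: derivative_eq_intros simp: power2_eq_square)
    moreover have "1 + 2 * z - exp z \<le> 0"
      using exp_ge_add_one_self[of z] z by linarith
    ultimately show "\<exists>d. DERIV ?h z :> d \<and> d \<le> 0" by blast
  qed
  thus ?thesis by simp
qed

lemma hoeffding_single:
  fixes a :: "'r \<Rightarrow> real"
  assumes R: "finite R" and bnd: "\<And>r. r \<in> R \<Longrightarrow> \<bar>a r\<bar> \<le> c" and z: "sum a R = 0"
    and t: "0 \<le> t" "t * c \<le> 1"
  shows "(\<Sum>r\<in>R. exp (t * a r)) \<le> real (card R) * exp (t\<^sup>2 * c\<^sup>2)"
proof -
  have c: "0 \<le> c" if "R \<noteq> {}" using bnd that by fastforce
  have "(\<Sum>r\<in>R. exp (t * a r)) \<le> (\<Sum>r\<in>R. 1 + t * a r + t\<^sup>2 * c\<^sup>2)"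
  proof (rule sum_mono)
    fix r assume r: "r \<in> R"
    have ab: "\<bar>a r\<bar> \<le> c" using bnd r by simp
    have "\<bar>t * a r\<bar> \<le> t * c" using ab t by (simp add: abs_mult mult_left_mono)
    hence "exp (t * a r) \<le> 1 + t * a r + (t * a r)\<^sup>2" using t by (intro exp_quad_bound) simp
    also have "(t * a r)\<^sup>2 \<le> t\<^sup>2 * c\<^sup>2"
    proof -
      have "(a r)\<^sup>2 \<le> c\<^sup>2" using ab by (metis abs_le_square_iff abs_of_nonneg abs_ge_zero order_trans)
      thus ?thesis by (simp add: power_mult_distrib mult_left_mono)
    qed
    finally show "exp (t * a r) \<le> 1 + t * a r + t\<^sup>2 * c\<^sup>2" by simp
  qed
  also have "\<dots> = real (card R) * (1 + t\<^sup>2 * c\<^sup>2)"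
    using z by (simp add: sum.distrib sum_distrib_left[symmetric] algebra_simps)
  also have "\<dots> \<le> real (card R) * exp (t\<^sup>2 * c\<^sup>2)"
    by (intro mult_left_mono) auto
  finally show ?thesis .
qed

lemma hoeffding_sum:
  fixes a :: "'p \<Rightarrow> 'r \<Rightarrow> real"
  assumes S: "finite S" and R: "\<And>p. p \<in> S \<Longrightarrow> finite (R p)"
    and bnd: "\<And>p r. p \<in> S \<Longrightarrow> r \<in> R p \<Longrightarrow> \<bar>a p r\<bar> \<le> c"
    and z: "\<And>p. p \<in> S \<Longrightarrow> sum (a p) (R p) = 0"
    and t: "0 \<le> t" "t * c \<le> 1"
  shows "real (card {w \<in> PiE S R. s \<le> (\<Sum>p\<in>S. a p (w p))})
      \<le> real (card (PiE S R)) * exp (real (card S) * t\<^sup>2 * c\<^sup>2 - t * s)"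
proof -
  have fin: "finite (PiE S R)" using S R by (intro finite_PiE) auto
  have "real (card {w \<in> PiE S R. s \<le> (\<Sum>p\<in>S. a p (w p))}) * exp (t * s)
      = (\<Sum>w\<in>PiE S R. if s \<le> (\<Sum>p\<in>S. a p (w p)) then exp (t * s) else 0)"
    using fin by (simp add: sum.If_cases Int_def)
  also have "\<dots> \<le> (\<Sum>w\<in>PiE S R. exp (t * (\<Sum>p\<in>S. a p (w p))))"
    using t by (intro sum_mono) (auto intro: mult_left_mono)
  also have "\<dots> = (\<Sum>w\<in>PiE S R. \<Prod>p\<in>S. exp (t * a p (w p)))"
    by (simp add: sum_distrib_left exp_sum S)
  also have "\<dots> = (\<Prod>p\<in>S. \<Sum>r\<in>R p. exp (t * a p r))"
    using S R by (subst prod_sum_PiE) auto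
  also have "\<dots> \<le> (\<Prod>p\<in>S. real (card (R p)) * exp (t\<^sup>2 * c\<^sup>2))"
    using R bnd z t by (intro prod_mono conjI sum_nonneg hoeffding_single) auto
  also have "\<dots> = real (card (PiE S R)) * exp (real (card S) * t\<^sup>2 * c\<^sup>2)"
    using S R by (simp add: prod.distrib card_PiE exp_of_nat_mult[symmetric] mult.assoc)
  finally have "real (card {w \<in> PiE S R. s \<le> (\<Sum>p\<in>S. a p (w p))}) * exp (t * s)
      \<le> real (card (PiE S R)) * exp (real (card S) * t\<^sup>2 * c\<^sup>2)" .
  hence "real (card {w \<in> PiE S R. s \<le> (\<Sum>p\<in>S. a p (w p))})
      \<le> real (card (PiE S R)) * exp (real (card S) * t\<^sup>2 * c\<^sup>2) / exp (t * s)"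
    by (simp add: field_simps)
  also have "\<dots> = real (card (PiE S R)) * exp (real (card S) * t\<^sup>2 * c\<^sup>2 - t * s)"
    by (simp add: exp_diff)
  finally show ?thesis .
qed


lemma liminf_zero_crit:
  fixes a :: "nat \<Rightarrow> real"
  assumes nn: "\<And>k. 0 \<le> a k" and small: "\<And>d K0. 0 < d \<Longrightarrow> \<exists>k\<ge>K0. a k < d"
  shows "liminf (\<lambda>k. ereal (a k)) = 0"
proof (rule antisym)
  show "0 \<le> liminf (\<lambda>k. ereal (a k))" using nn by (intro Liminf_bounded always_eventually) auto
  show "liminf (\<lambda>k. ereal (a k)) \<le> 0"
  proof (rule ereal_le_epsilon2)
    fix d :: real assume d: "0 < d"
    have "(SUP n. INF m\<in>{n..}. ereal (a m)) \<le> ereal d"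
    proof (rule SUP_least)
      fix n
      obtain k where k: "k \<ge> n" "a k < d" using small[OF d, of n] by auto
      have "(INF m\<in>{n..}. ereal (a m)) \<le> ereal (a k)" using k by (intro INF_lower) auto
      also have "\<dots> \<le> ereal d" using k by simp
      finally show "(INF m\<in>{n..}. ereal (a m)) \<le> ereal d" .
    qed
    thus "liminf (\<lambda>k. ereal (a k)) \<le> 0 + ereal d" by (simp add: liminf_SUP_INF)
  qed
qed

lemma geom_sum_le1: "(\<Sum>j<J. 1 / 2 ^ Suc j :: real) \<le> 1"
proof -
  have "(\<Sum>j<J. 1 / 2 ^ Suc j :: real) = 1 - 1 / 2 ^ J"
    by (induction J) (simp_all add: field_simps)
  thus ?thesis by simp
qed

lemma selection:
  fixes I N :: "nat \<Rightarrow> real"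
  assumes Inn: "\<And>j. 0 \<le> I j" and Nnn: "\<And>j. 0 \<le> N j"
    and Ib: "\<And>J. (\<Sum>j<J. I j / 2 ^ Suc j) \<le> B"
    and Nu: "\<And>B'. \<exists>J. B' \<le> (\<Sum>j<J. N j / 2 ^ Suc j)"
    and eps: "0 < \<epsilon>"
  shows "\<exists>j\<ge>J0. I j \<le> \<epsilon> * N j \<and> N0 \<le> N j"
proof (rule ccontr)
  assume neg: "\<not> (\<exists>j\<ge>J0. I j \<le> \<epsilon> * N j \<and> N0 \<le> N j)"
  have bad: "N j \<le> I j / \<epsilon> + \<bar>N0\<bar>" if "j \<ge> J0" for j
  proof -
    have nb: "\<not> (I j \<le> \<epsilon> * N j \<and> N0 \<le> N j)" using neg that by auto
    have q: "0 \<le> I j / \<epsilon>" using Inn[of j] eps by simp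
    show ?thesis
    proof (cases "I j \<le> \<epsilon> * N j")
      case True
      hence "N j < N0" using nb by simp
      thus ?thesis using q by linarith
    next
      case False
      hence "\<epsilon> * N j < I j" by simp
      hence "N j < I j / \<epsilon>" using eps by (simp add: field_simps)
      thus ?thesis by linarith
    qed
  qed
  define S0 where "S0 = (\<Sum>j<J0. N j / 2 ^ Suc j)"
  obtain J where J: "S0 + B / \<epsilon> + \<bar>N0\<bar> + 1 \<le> (\<Sum>j<J. N j / 2 ^ Suc j)" using Nu by blast
  have "(\<Sum>j<J. N j / 2 ^ Suc j) \<le> (\<Sum>j<J. (if j < J0 then N j / 2 ^ Suc j else 0) + (I j / \<epsilon> / 2 ^ Suc j + \<bar>N0\<bar> * (1 / 2 ^ Suc j)))"
  proof (rule sum_mono)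
    fix j
    show "N j / 2 ^ Suc j \<le> (if j < J0 then N j / 2 ^ Suc j else 0) + (I j / \<epsilon> / 2 ^ Suc j + \<bar>N0\<bar> * (1 / 2 ^ Suc j))"
    proof (cases "j < J0")
      case True thus ?thesis using Inn[of j] eps by simp
    next
      case False
      hence "N j \<le> I j / \<epsilon> + \<bar>N0\<bar>" using bad by simp
      hence "N j / 2 ^ Suc j \<le> (I j / \<epsilon> + \<bar>N0\<bar>) / 2 ^ Suc j" by (intro divide_right_mono) auto
      thus ?thesis using False by (simp add: add_divide_distrib)
    qed
  qed
  also have "\<dots> = (\<Sum>j<J. if j < J0 then N j / 2 ^ Suc j else 0) + (\<Sum>j<J. I j / 2 ^ Suc j) / \<epsilon> + \<bar>N0\<bar> * (\<Sum>j<J. 1 / 2 ^ Suc j)"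
    by (simp add: sum.distrib sum_divide_distrib sum_distrib_left mult.commute)
  also have "(\<Sum>j<J. if j < J0 then N j / 2 ^ Suc j else 0) \<le> S0"
  proof -
    have "(\<Sum>j<J. if j < J0 then N j / 2 ^ Suc j else 0) = (\<Sum>j\<in>{..<J} \<inter> {..<J0}. N j / 2 ^ Suc j)"
      by (simp add: sum.If_cases Int_def)
    also have "\<dots> \<le> S0" unfolding S0_def using Nnn by (intro sum_mono2) auto
    finally show ?thesis .
  qed
  also have "(\<Sum>j<J. I j / 2 ^ Suc j) / \<epsilon> \<le> B / \<epsilon>" using Ib eps by (simp add: divide_right_mono)
  also have "\<bar>N0\<bar> * (\<Sum>j<J. 1 / 2 ^ Suc j) \<le> \<bar>N0\<bar> * 1" by (intro mult_left_mono geom_sum_le1) auto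
  finally show False using J by simp
qed

lemma final_num:
  fixes d e I N :: real
  assumes d: "0 < d" "d \<le> 1" and e: "e = d / 8" and I: "I \<le> e\<^sup>2 * d / 2048 * N"
    and N1: "384 / e\<^sup>2 \<le> N" and N2: "2048 / (e\<^sup>2 * d) \<le> N"
  shows "0 < N * e\<^sup>2 / 64 - ln 4"
    and "2 * e + 2 * (I + 1) / (N * e\<^sup>2 / 64 - ln 4) + 8 * exp (- N * e\<^sup>2 / 64) < d"
proof -
  have epos: "0 < e" using d e by simp
  have e2: "0 < e\<^sup>2" using epos by simp
  have Npos: "0 < N" using N1 e2 by (smt (verit) divide_pos_pos)
  have ln4: "ln (4::real) \<le> 3" using ln_le_minus_one[of 4] by simp
  have Ne: "384 \<le> N * e\<^sup>2" using N1 e2 by (simp add: field_simps)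
  have Ne2: "2048 \<le> N * e\<^sup>2 * d" using N2 e2 d by (simp add: field_simps)
  have Lge: "N * e\<^sup>2 / 128 \<le> N * e\<^sup>2 / 64 - ln 4" using Ne ln4 by simp
  have Lpos: "0 < N * e\<^sup>2 / 128" using Ne by simp
  thus "0 < N * e\<^sup>2 / 64 - ln 4" using Lge by simp
  have Inn: "I + 1 \<le> e\<^sup>2 * d / 2048 * N + 1" using I by linarith
  have t1: "2 * (I + 1) / (N * e\<^sup>2 / 64 - ln 4) \<le> 2 * (e\<^sup>2 * d / 2048 * N + 1) / (N * e\<^sup>2 / 128)"
  proof (rule frac_le)
    show "0 \<le> 2 * (e\<^sup>2 * d / 2048 * N + 1)" using e2 d Npos by simp
    show "2 * (I + 1) \<le> 2 * (e\<^sup>2 * d / 2048 * N + 1)" using mult_left_mono[OF Inn, of 2] by simp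
  qed (use Lpos Lge in auto)
  also have "\<dots> = d / 8 + 256 / (N * e\<^sup>2)" using Npos e2 by (simp add: field_simps)
  also have "256 / (N * e\<^sup>2) \<le> d / 8"
  proof -
    have "256 / (N * e\<^sup>2) = 256 * d / (N * e\<^sup>2 * d)" using d by (simp add: field_simps)
    also have "\<dots> \<le> 256 * d / 2048" using Ne2 d by (intro divide_left_mono) auto
    finally show ?thesis by simp
  qed
  finally have T1: "2 * (I + 1) / (N * e\<^sup>2 / 64 - ln 4) \<le> d / 4" by simp
  have xpos: "0 < N * e\<^sup>2 / 64" using Npos e2 by simp
  have xle: "N * e\<^sup>2 / 64 \<le> exp (N * e\<^sup>2 / 64)" using exp_ge_add_one_self[of "N * e\<^sup>2 / 64"] by linarith
  have "exp (- N * e\<^sup>2 / 64) = 1 / exp (N * e\<^sup>2 / 64)" by (simp add: exp_minus inverse_eq_divide)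
  also have "\<dots> \<le> 1 / (N * e\<^sup>2 / 64)" using xpos xle by (intro divide_left_mono) auto
  also have "\<dots> = 64 / (N * e\<^sup>2)" by simp
  finally have "exp (- N * e\<^sup>2 / 64) \<le> 64 / (N * e\<^sup>2)" .
  hence "8 * exp (- N * e\<^sup>2 / 64) \<le> 512 / (N * e\<^sup>2)" by simp
  also have "512 / (N * e\<^sup>2) \<le> d / 4"
  proof -
    have "512 / (N * e\<^sup>2) = 512 * d / (N * e\<^sup>2 * d)" using d by (simp add: field_simps)
    also have "\<dots> \<le> 512 * d / 2048" using Ne2 d by (intro divide_left_mono) auto
    finally show ?thesis by simp
  qed
  finally have T2: "8 * exp (- N * e\<^sup>2 / 64) \<le> d / 4" .
  show "2 * e + 2 * (I + 1) / (N * e\<^sup>2 / 64 - ln 4) + 8 * exp (- N * e\<^sup>2 / 64) < d"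
    using T1 T2 e d by linarith
qed


lemma finite_primes_between [simp]: "finite (primes_between P)"
  unfolding primes_between_def by (rule finite_subset[of _ "{..P}"]) auto

lemma finite_primes_upto [simp]: "finite (primes_upto P)"
  unfolding primes_upto_def by (rule finite_subset[of _ "{..P}"]) auto

lemma (in finite_measure) measure_sum_fibers:
  assumes K: "finite K" and meas: "\<And>k. k \<in> K \<Longrightarrow> {\<omega>\<in>space M. V \<omega> = k \<and> Q \<omega>} \<in> sets M"
  shows "measure M {\<omega>\<in>space M. V \<omega> \<in> K \<and> Q \<omega>} = (\<Sum>k\<in>K. measure M {\<omega>\<in>space M. V \<omega> = k \<and> Q \<omega>})"
proof -
  have eq: "{\<omega>\<in>space M. V \<omega> \<in> K \<and> Q \<omega>} = (\<Union>k\<in>K. {\<omega>\<in>space M. V \<omega> = k \<and> Q \<omega>})" by auto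
  show ?thesis unfolding eq
    by (rule measure_finite_Union) (use K meas in \<open>auto simp: disjoint_family_on_def emeasure_eq_measure\<close>)
qed

lemma measurable_countable_fibers:
  assumes K: "countable K" and range: "\<And>\<omega>. \<omega> \<in> space M \<Longrightarrow> V \<omega> \<in> K"
    and meas: "\<And>k. k \<in> K \<Longrightarrow> {\<omega>\<in>space M. V \<omega> = k} \<in> sets M"
  shows "V \<in> M \<rightarrow>\<^sub>M count_space UNIV"
proof -
  have "V \<in> M \<rightarrow>\<^sub>M count_space K"
  proof (subst measurable_count_space_eq_countable[OF K], intro conjI ballI)
    show "V \<in> space M \<rightarrow> K" using range by auto
  next
    fix a assume "a \<in> K"
    moreover have "V -` {a} \<inter> space M = {\<omega>\<in>space M. V \<omega> = a}" by auto
    ultimately show "V -` {a} \<inter> space M \<in> sets M" using meas by simp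
  qed
  moreover have "(\<lambda>z. z) \<in> count_space K \<rightarrow>\<^sub>M count_space UNIV" by simp
  ultimately show ?thesis by (rule measurable_compose[where f=V and g="\<lambda>z. z", simplified])
qed

lemma (in prob_space) integral_finite_rv:
  fixes h :: "'b \<Rightarrow> real"
  assumes V: "V \<in> M \<rightarrow>\<^sub>M count_space UNIV" and K: "finite K" and ae: "AE \<omega> in M. V \<omega> \<in> K"
  shows "integrable M (\<lambda>\<omega>. h (V \<omega>))"
    "integral\<^sup>L M (\<lambda>\<omega>. h (V \<omega>)) = (\<Sum>k\<in>K. h k * measure M {\<omega>\<in>space M. V \<omega> = k})"
proof -
  define g where "g \<omega> = (\<Sum>k\<in>K. h k * indicator {\<omega>\<in>space M. V \<omega> = k} \<omega>)" for \<omega>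
  have sets: "{\<omega>\<in>space M. V \<omega> = k} \<in> sets M" for k
  proof -
    have "V -` {k} \<inter> space M \<in> sets M" using measurable_sets[OF V, of "{k}"] by simp
    moreover have "V -` {k} \<inter> space M = {\<omega>\<in>space M. V \<omega> = k}" by auto
    ultimately show ?thesis by simp
  qed
  have hm: "(\<lambda>\<omega>. h (V \<omega>)) \<in> borel_measurable M"
    using V by (rule measurable_compose) simp
  have gi: "integrable M g" unfolding g_def
  proof (rule Bochner_Integration.integrable_sum)
    fix k assume "k \<in> K"
    have "integrable M (indicator {\<omega>\<in>space M. V \<omega> = k} :: 'a \<Rightarrow> real)"
      using sets by (intro integrable_real_indicator) (auto simp: emeasure_eq_measure)
    thus "integrable M (\<lambda>\<omega>. h k * indicator {\<omega>\<in>space M. V \<omega> = k} \<omega>)"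
      by (rule integrable_mult_right)
  qed
  have gm: "g \<in> borel_measurable M" using gi by (rule borel_measurable_integrable)
  have aeq: "AE \<omega> in M. h (V \<omega>) = g \<omega>"
    using ae
  proof (rule AE_mp, intro AE_I2 impI)
    fix \<omega> assume \<omega>: "\<omega> \<in> space M" "V \<omega> \<in> K"
    have "g \<omega> = (\<Sum>k\<in>K. if k = V \<omega> then h k else 0)"
      unfolding g_def by (intro sum.cong) (auto simp: indicator_def \<omega>)
    also have "\<dots> = h (V \<omega>)" using K \<omega> by simp
    finally show "h (V \<omega>) = g \<omega>" by simp
  qed
  show "integrable M (\<lambda>\<omega>. h (V \<omega>))" using integrable_cong_AE[OF hm gm aeq] gi by simp
  have "integral\<^sup>L M (\<lambda>\<omega>. h (V \<omega>)) = integral\<^sup>L M g" using integral_cong_AE[OF hm gm aeq] .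
  also have "\<dots> = (\<Sum>k\<in>K. integral\<^sup>L M (\<lambda>\<omega>. h k * indicator {\<omega>\<in>space M. V \<omega> = k} \<omega>))"
    unfolding g_def
  proof (rule Bochner_Integration.integral_sum)
    fix k assume "k \<in> K"
    have "integrable M (indicator {\<omega>\<in>space M. V \<omega> = k} :: 'a \<Rightarrow> real)"
      using sets by (intro integrable_real_indicator) (auto simp: emeasure_eq_measure)
    thus "integrable M (\<lambda>\<omega>. h k * indicator {\<omega>\<in>space M. V \<omega> = k} \<omega>)"
      by (rule integrable_mult_right)
  qed
  also have "\<dots> = (\<Sum>k\<in>K. h k * measure M {\<omega>\<in>space M. V \<omega> = k})"
  proof (rule sum.cong[OF refl])
    fix k
    have "{\<omega>\<in>space M. V \<omega> = k} \<inter> space M = {\<omega>\<in>space M. V \<omega> = k}" by auto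
    thus "integral\<^sup>L M (\<lambda>\<omega>. h k * indicator {\<omega>\<in>space M. V \<omega> = k} \<omega>) = h k * measure M {\<omega>\<in>space M. V \<omega> = k}"
      by (simp del: Int_def)
  qed
  finally show "integral\<^sup>L M (\<lambda>\<omega>. h (V \<omega>)) = (\<Sum>k\<in>K. h k * measure M {\<omega>\<in>space M. V \<omega> = k})" .
qed


lemma prod_mult_primes_upto:
  assumes n: "1 \<le> n" "n \<le> x"
  shows "(\<Prod>p\<in>primes_upto x. p ^ multiplicity p n) = n"
proof -
  have sub: "prime_factors n \<subseteq> primes_upto x"
  proof
    fix p assume p: "p \<in> prime_factors n"
    hence "prime p" "p dvd n" by (auto simp: prime_factors_dvd)
    hence "p \<le> n" using n by (intro dvd_imp_le) auto
    thus "p \<in> primes_upto x" using \<open>prime p\<close> n by (simp add: primes_upto_def)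
  qed
  have fin: "finite (primes_upto x)" unfolding primes_upto_def by simp
  have "(\<Prod>p\<in>primes_upto x. p ^ multiplicity p n) = (\<Prod>p\<in>prime_factors n. p ^ multiplicity p n)"
  proof (rule prod.mono_neutral_right[OF fin sub])
    show "\<forall>i\<in>primes_upto x - prime_factors n. i ^ multiplicity i n = 1"
      using n by (auto simp: primes_upto_def prime_factors_multiplicity)
  qed
  also have "\<dots> = n" using n by (simp add: prod_prime_factors)
  finally show ?thesis .
qed

lemma harm_le_prod:
  "(\<Sum>n=1..x. 1 / real n) \<le> (\<Prod>p\<in>primes_upto x. \<Sum>e\<in>{..x}. (1 / real p) ^ e)"
proof -
  define S where "S = primes_upto x"
  have fin: "finite S" unfolding S_def primes_upto_def by simp
  define \<phi> where "\<phi> n = restrict (\<lambda>p. multiplicity p n) S" for n :: nat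
  have prodn: "(\<Prod>p\<in>S. p ^ \<phi> n p) = n" if "n \<in> {1..x}" for n
    using prod_mult_primes_upto[of n x] that by (simp add: \<phi>_def S_def)
  have inj: "inj_on \<phi> {1..x}"
  proof
    fix n m assume "n \<in> {1..x}" "m \<in> {1..x}" "\<phi> n = \<phi> m"
    thus "n = m" using prodn by metis
  qed
  have img: "\<phi> ` {1..x} \<subseteq> PiE S (\<lambda>_. {..x})"
  proof
    fix g assume "g \<in> \<phi> ` {1..x}"
    then obtain n where n: "n \<in> {1..x}" "g = \<phi> n" by auto
    have "multiplicity p n \<le> x" if "p \<in> S" for p
    proof -
      have pp: "prime p" using that by (simp add: S_def primes_upto_def)
      have "p ^ multiplicity p n dvd n" by (rule multiplicity_dvd)
      hence "p ^ multiplicity p n \<le> n" using n by (intro dvd_imp_le) auto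
      moreover have "multiplicity p n < 2 ^ multiplicity p n" by (rule less_exp)
      moreover have "2 ^ multiplicity p n \<le> p ^ multiplicity p n"
        using prime_ge_2_nat[OF pp] by (intro power_mono) auto
      ultimately show ?thesis using n by (meson atLeastAtMost_iff le_trans less_imp_le_nat)
    qed
    thus "g \<in> PiE S (\<lambda>_. {..x})" using n by (auto simp: \<phi>_def)
  qed
  have val: "1 / real n = (\<Prod>p\<in>S. (1 / real p) ^ \<phi> n p)" if "n \<in> {1..x}" for n
  proof -
    have "(\<Prod>p\<in>S. (1 / real p) ^ \<phi> n p) = 1 / real (\<Prod>p\<in>S. p ^ \<phi> n p)"
      by (simp add: power_one_over prod_dividef)
    thus ?thesis using prodn[OF that] by simp
  qed
  have "(\<Sum>n=1..x. 1 / real n) = (\<Sum>n\<in>{1..x}. \<Prod>p\<in>S. (1 / real p) ^ \<phi> n p)"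
    by (intro sum.cong) (auto simp: val)
  also have "\<dots> = (\<Sum>g\<in>\<phi> ` {1..x}. \<Prod>p\<in>S. (1 / real p) ^ g p)"
    using inj by (simp add: sum.reindex)
  also have "\<dots> \<le> (\<Sum>g\<in>PiE S (\<lambda>_. {..x}). \<Prod>p\<in>S. (1 / real p) ^ g p)"
    using img fin by (intro sum_mono2 finite_PiE prod_nonneg) auto
  also have "\<dots> = (\<Prod>p\<in>S. \<Sum>e\<in>{..x}. (1 / real p) ^ e)"
    using fin by (subst prod_sum_PiE) auto
  finally show ?thesis by (simp add: S_def)
qed

lemma geom_le_exp:
  assumes "prime p"
  shows "(\<Sum>e\<in>{..x}. (1 / real p) ^ e) \<le> exp (2 / real p)"
proof -
  define q where "q = 1 / real p"
  have p2: "2 \<le> real p" using prime_ge_2_nat[OF assms] by simp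
  have q: "0 < q" "q \<le> 1/2" using p2 by (auto simp: q_def field_simps)
  have "(\<Sum>e\<in>{..x}. q ^ e) = (\<Sum>e<Suc x. q ^ e)" by (simp add: lessThan_Suc_atMost)
  also have "\<dots> = (1 - q ^ Suc x) / (1 - q)" using q by (auto simp: sum_gp_strict simp del: sum.lessThan_Suc)
  also have "\<dots> \<le> 1 / (1 - q)" using q by (intro divide_right_mono) auto
  also have "\<dots> \<le> exp (2 * q)"
  proof -
    have "- q - 2 * q\<^sup>2 \<le> ln (1 - q)" using q by (intro ln_one_minus_pos_lower_bound) auto
    moreover have "- 2 * q \<le> - q - 2 * q\<^sup>2"
    proof -
      have "q * q \<le> q * (1/2)" using q by (intro mult_left_mono) auto
      thus ?thesis by (simp add: power2_eq_square)
    qed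
    ultimately have "exp (- 2 * q) \<le> exp (ln (1 - q))" by simp
    hence "exp (- 2 * q) \<le> 1 - q" using q by simp
    hence "1 / (1 - q) \<le> 1 / exp (- 2 * q)" using q by (intro divide_left_mono) auto
    thus ?thesis by (simp add: exp_minus field_simps)
  qed
  finally show ?thesis by (simp add: q_def)
qed

lemma lnln_le_prime_sum:
  assumes "1 \<le> x"
  shows "ln (ln (real x + 1)) \<le> 2 * (\<Sum>p\<in>primes_upto x. 1 / real p)"
proof -
  have fin: "finite (primes_upto x)" unfolding primes_upto_def by simp
  have "ln (real x + 1) \<le> (\<Sum>n=1..x. 1 / real n)"
    using ln_le_harm[of x] by (simp add: harm_def inverse_eq_divide)
  also have "\<dots> \<le> (\<Prod>p\<in>primes_upto x. \<Sum>e\<in>{..x}. (1 / real p) ^ e)" by (rule harm_le_prod)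
  also have "\<dots> \<le> (\<Prod>p\<in>primes_upto x. exp (2 / real p))"
    by (intro prod_mono conjI sum_nonneg geom_le_exp) (auto simp: primes_upto_def)
  also have "\<dots> = exp (2 * (\<Sum>p\<in>primes_upto x. 1 / real p))"
    using fin by (simp add: exp_sum sum_distrib_left)
  finally have h: "ln (real x + 1) \<le> exp (2 * (\<Sum>p\<in>primes_upto x. 1 / real p))" .
  have "0 < ln (real x + 1)" using assms by simp
  hence "ln (ln (real x + 1)) \<le> ln (exp (2 * (\<Sum>p\<in>primes_upto x. 1 / real p)))"
    using h by (subst ln_le_cancel_iff) auto
  thus ?thesis by simp
qed

lemma primes_upto_pow2_Suc:
  "primes_upto (2 ^ Suc K) = primes_upto (2 ^ K) \<union> primes_between (2 ^ Suc K)"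
  "primes_upto (2 ^ K) \<inter> primes_between (2 ^ Suc K) = {}"
  by (auto simp: primes_upto_def primes_between_def)


lemma prime_sum_le_dyadic:
  "(\<Sum>p\<in>primes_upto (2 ^ K). 1 / real p) \<le> 2 * (\<Sum>k\<in>{1..K}. real (card (primes_between (2 ^ k))) / 2 ^ k)"
proof (induction K)
  case 0
  have "primes_upto (2 ^ 0) = {}" by (auto simp: primes_upto_def dest: prime_gt_1_nat)
  thus ?case by simp
next
  case (Suc K)
  have "(\<Sum>p\<in>primes_between (2 ^ Suc K). 1 / real p) \<le> (\<Sum>p\<in>primes_between (2 ^ Suc K). 2 / 2 ^ Suc K)"
  proof (rule sum_mono)
    fix p assume "p \<in> primes_between (2 ^ Suc K)"
    hence "2 ^ Suc K < 2 * p" "prime p" by (auto simp: primes_between_def)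
    hence "real (2 ^ Suc K) < 2 * real p" "0 < real p" by (simp_all add: of_nat_less_iff[symmetric] prime_gt_0_nat del: of_nat_less_iff)
    thus "1 / real p \<le> 2 / 2 ^ Suc K" by (simp add: field_simps)
  qed
  moreover have "(\<Sum>p\<in>primes_upto (2 ^ Suc K). 1 / real p) = (\<Sum>p\<in>primes_upto (2 ^ K). 1 / real p)
      + (\<Sum>p\<in>primes_between (2 ^ Suc K). 1 / real p)"
    unfolding primes_upto_pow2_Suc(1) by (rule sum.union_disjoint) (auto simp: primes_upto_def primes_between_def)
  moreover have "(\<Sum>p\<in>primes_between (2 ^ Suc K). 2 / 2 ^ Suc K :: real) = 2 * (real (card (primes_between (2 ^ Suc K))) / 2 ^ Suc K)"
    by simp
  ultimately show ?case using Suc by (simp add: sum.cl_ivl_Suc algebra_simps)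
qed

lemma dyadic_unbounded:
  "\<exists>K. B \<le> (\<Sum>k\<in>{1..K}. real (card (primes_between (2 ^ k))) / 2 ^ k)"
proof -
  obtain K :: nat where K: "exp (exp (4 * \<bar>B\<bar>)) < 2 ^ K"
    using real_arch_pow[of 2 "exp (exp (4 * \<bar>B\<bar>))"] by auto
  have K1: "1 \<le> (2::nat) ^ K" by simp
  have "4 * \<bar>B\<bar> \<le> ln (ln (real (2 ^ K) + 1))"
  proof -
    have "exp (exp (4 * \<bar>B\<bar>)) \<le> real (2 ^ K) + 1" using K by simp
    moreover have pos: "(0::real) < real (2 ^ K) + 1" by (simp add: add_pos_nonneg)
    ultimately have "exp (4 * \<bar>B\<bar>) \<le> ln (real (2 ^ K) + 1)"
      by (subst ln_ge_iff) auto
    thus ?thesis by (subst ln_ge_iff) (auto intro: less_le_trans[OF exp_gt_zero])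
  qed
  also have "\<dots> \<le> 2 * (\<Sum>p\<in>primes_upto (2 ^ K). 1 / real p)" using K1 by (intro lnln_le_prime_sum) simp
  also have "\<dots> \<le> 4 * (\<Sum>k\<in>{1..K}. real (card (primes_between (2 ^ k))) / 2 ^ k)"
    using prime_sum_le_dyadic[of K] by simp
  finally have "B \<le> (\<Sum>k\<in>{1..K}. real (card (primes_between (2 ^ k))) / 2 ^ k)"
    using abs_ge_self[of B] by linarith
  thus ?thesis by blast
qed


locale setting =
  fixes M :: "'w measure"
    and A :: "'a set" and C :: nat
    and x :: "nat \<Rightarrow> 'w \<Rightarrow> 'a"
    and y :: "nat \<Rightarrow> 'w \<Rightarrow> nat"
    and f :: "nat \<Rightarrow> nat \<Rightarrow> 'a list \<Rightarrow> nat \<Rightarrow> complex"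
    and W :: "nat \<Rightarrow> 'w \<Rightarrow> nat \<Rightarrow> nat"
  assumes M: "prob_space M"
    and A: "finite A"
    and x_meas: "\<And>i. x i \<in> M \<rightarrow>\<^sub>M count_space UNIV"
    and x_range: "\<And>i \<omega>. i \<ge> 1 \<Longrightarrow> \<omega> \<in> space M \<Longrightarrow> x i \<omega> \<in> A"
    and y_meas: "\<And>p. y p \<in> M \<rightarrow>\<^sub>M count_space UNIV"
    and y_range: "\<And>p \<omega>. prime p \<Longrightarrow> \<omega> \<in> space M \<Longrightarrow> y p \<omega> < p"
    and uniform: "\<And>P b. (\<forall>p\<in>primes_upto P. b p < p) \<Longrightarrow>
        measure M {\<omega>\<in>space M. \<forall>p\<in>primes_upto P. y p \<omega> = b p}
          = 1 / real (\<Prod>p\<in>primes_upto P. p)"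
    and cond_stationary: "\<And>P b i m (S :: 'a list set). (\<forall>p\<in>primes_upto P. b p < p) \<Longrightarrow>
        cprob M (\<lambda>\<omega>. window x 0 m \<omega> \<in> S) (\<lambda>\<omega>. \<forall>p\<in>primes_upto P. y p \<omega> = b p)
          = cprob M (\<lambda>\<omega>. window x i m \<omega> \<in> S)
              (\<lambda>\<omega>. \<forall>p\<in>primes_upto P. y p \<omega> = (b p + i) mod p)"
    and f_bound: "\<And>k p X r. p \<in> primes_between (2^k) \<Longrightarrow> length X = C * 2^k \<Longrightarrow>
        set X \<subseteq> A \<Longrightarrow> r < p \<Longrightarrow> cmod (f (2^k) p X r) \<le> 1"
    and W_meas: "\<And>k p. (\<lambda>\<omega>. W (2^k) \<omega> p) \<in> M \<rightarrow>\<^sub>M count_space UNIV"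
    and W_distr: "\<And>k b.
        measure M {\<omega>\<in>space M. \<forall>p\<in>primes_between (2^k). W (2^k) \<omega> p = b p}
          = measure M {\<omega>\<in>space M. \<forall>p\<in>primes_between (2^k). y p \<omega> = b p}"
    and W_indep: "\<And>k b (S :: 'a list set).
        measure M {\<omega>\<in>space M. window x 0 (C * 2^k) \<omega> \<in> S
                      \<and> (\<forall>p\<in>primes_between (2^k). W (2^k) \<omega> p = b p)}
          = measure M {\<omega>\<in>space M. window x 0 (C * 2^k) \<omega> \<in> S}
            * measure M {\<omega>\<in>space M. \<forall>p\<in>primes_between (2^k). W (2^k) \<omega> p = b p}"
begin

interpretation P: prob_space M by (rule M)

definition U :: "nat \<Rightarrow> 'a list set" where "U n = {u. set u \<subseteq> A \<and> length u = n}"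
definition Bv :: "nat set \<Rightarrow> (nat \<Rightarrow> nat) set" where "Bv T = PiE T (\<lambda>p. {..<p})"
definition mm :: "nat \<Rightarrow> nat \<Rightarrow> nat set \<Rightarrow> (nat \<Rightarrow> nat) \<Rightarrow> 'a list \<Rightarrow> real" where
  "mm i n T c u = measure M {\<omega>\<in>space M. window x i n \<omega> = u \<and> (\<forall>p\<in>T. y p \<omega> = c p)}"
definition hh :: "nat \<Rightarrow> nat \<Rightarrow> nat set \<Rightarrow> real" where
  "hh i n T = - (\<Sum>c\<in>Bv T. \<Sum>u\<in>U n. mm i n T c u * ln (mm i n T c u * real (card (Bv T))))"

lemma finite_U [simp]: "finite (U n)"
  unfolding U_def using A by (rule finite_lists_length_eq)

lemma finite_Bv [simp]: "finite T \<Longrightarrow> finite (Bv T)"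
  unfolding Bv_def by (intro finite_PiE) auto

lemma card_Bv: "finite T \<Longrightarrow> card (Bv T) = (\<Prod>p\<in>T. p)"
  unfolding Bv_def by (simp add: card_PiE)

lemma length_window [simp]: "length (window x i n \<omega>) = n"
  by (simp add: window_def)

lemma nth_window: "j < n \<Longrightarrow> window x i n \<omega> ! j = x (i + 1 + j) \<omega>"
  by (simp del: upt_Suc add: window_def algebra_simps)

lemma window_eq_iff: "window x i n \<omega> = u \<longleftrightarrow> length u = n \<and> (\<forall>j\<in>{..<n}. x (i + 1 + j) \<omega> = u ! j)"
  by (auto simp: list_eq_iff_nth_eq nth_window)

lemma window_in_U: "\<omega> \<in> space M \<Longrightarrow> window x i n \<omega> \<in> U n"
  by (auto simp: U_def window_def intro!: x_range)

lemma window_append: "window x i (m + n) \<omega> = window x i m \<omega> @ window x (i + m) n \<omega>"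
proof -
  have "[i+1..<i+(m+n)+1] = [i+1..<i+m+1] @ [i+m+1..<i+m+n+1]"
  proof -
    have "[i+1..<i+m+1+n] = [i+1..<i+m+1] @ [i+m+1..<i+m+1+n]" by (rule upt_add_eq_append) simp
    moreover have "i+(m+n)+1 = i+m+1+n" "i+m+n+1 = i+m+1+n" by simp_all
    ultimately show ?thesis by metis
  qed
  thus ?thesis unfolding window_def by (simp del: upt_Suc add: algebra_simps)
qed

lemma pred_x: "Measurable.pred M (\<lambda>\<omega>. x j \<omega> = a)"
proof -
  have "x j -` {a} \<inter> space M \<in> sets M" using measurable_sets[OF x_meas, of "{a}"] by simp
  moreover have "x j -` {a} \<inter> space M = {\<omega>\<in>space M. x j \<omega> = a}" by auto
  ultimately show ?thesis by (simp add: pred_def)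
qed

lemma pred_y: "Measurable.pred M (\<lambda>\<omega>. y j \<omega> = a)"
proof -
  have "y j -` {a} \<inter> space M \<in> sets M" using measurable_sets[OF y_meas, of "{a}"] by simp
  moreover have "y j -` {a} \<inter> space M = {\<omega>\<in>space M. y j \<omega> = a}" by auto
  ultimately show ?thesis by (simp add: pred_def)
qed

lemma pred_W: "Measurable.pred M (\<lambda>\<omega>. W (2^k) \<omega> j = a)"
proof -
  have "(\<lambda>\<omega>. W (2^k) \<omega> j) -` {a} \<inter> space M \<in> sets M" using measurable_sets[OF W_meas, of "{a}"] by simp
  moreover have "(\<lambda>\<omega>. W (2^k) \<omega> j) -` {a} \<inter> space M = {\<omega>\<in>space M. W (2^k) \<omega> j = a}" by auto
  ultimately show ?thesis by (simp add: pred_def)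
qed

lemma pred_window: "Measurable.pred M (\<lambda>\<omega>. window x i n \<omega> = u)"
  unfolding window_eq_iff using pred_x by measurable

lemma pred_yT: "finite T \<Longrightarrow> Measurable.pred M (\<lambda>\<omega>. \<forall>p\<in>T. y p \<omega> = c p)"
  using pred_y by measurable

lemma pred_WT: "finite T \<Longrightarrow> Measurable.pred M (\<lambda>\<omega>. \<forall>p\<in>T. W (2^k) \<omega> p = c p)"
  using pred_W by measurable

lemma pred_conjI: "Measurable.pred M P \<Longrightarrow> Measurable.pred M Q \<Longrightarrow> Measurable.pred M (\<lambda>\<omega>. P \<omega> \<and> Q \<omega>)"
  by measurable

lemma sets_ev: "finite T \<Longrightarrow> {\<omega>\<in>space M. window x i n \<omega> = u \<and> (\<forall>p\<in>T. y p \<omega> = c p)} \<in> sets M"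
  using pred_conjI[OF pred_window pred_yT] by (simp add: pred_def)

lemma sets_yT: "finite T \<Longrightarrow> {\<omega>\<in>space M. \<forall>p\<in>T. y p \<omega> = c p} \<in> sets M"
  using pred_yT by (simp add: pred_def)

definition merge :: "nat set \<Rightarrow> (nat \<Rightarrow> nat) \<Rightarrow> (nat \<Rightarrow> nat) \<Rightarrow> nat \<Rightarrow> nat" where
  "merge T1 c w p = (if p \<in> T1 then c p else w p)"

lemma restrict_y_in_Bv: "\<omega> \<in> space M \<Longrightarrow> T \<subseteq> {p. prime p} \<Longrightarrow> restrict (\<lambda>p. y p \<omega>) T \<in> Bv T"
  using y_range by (auto simp: Bv_def)

lemma restrict_eq_Bv: "w \<in> Bv T \<Longrightarrow> restrict (\<lambda>p. y p \<omega>) T = w \<longleftrightarrow> (\<forall>p\<in>T. y p \<omega> = w p)"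
  by (auto simp: Bv_def PiE_def extensional_def restrict_def fun_eq_iff)

lemma mm_nonneg: "0 \<le> mm i n T c u"
  by (simp add: mm_def)

lemma mm_le: "finite T \<Longrightarrow> mm i n T c u \<le> measure M {\<omega>\<in>space M. \<forall>p\<in>T. y p \<omega> = c p}"
  unfolding mm_def by (intro P.finite_measure_mono sets_yT) auto

lemma mm_total: assumes T: "finite T"
  shows "(\<Sum>u\<in>U n. mm i n T c u) = measure M {\<omega>\<in>space M. \<forall>p\<in>T. y p \<omega> = c p}"
proof -
  have "measure M {\<omega>\<in>space M. \<forall>p\<in>T. y p \<omega> = c p}
      = measure M {\<omega>\<in>space M. window x i n \<omega> \<in> U n \<and> (\<forall>p\<in>T. y p \<omega> = c p)}"
    using window_in_U by (intro arg_cong[where f="measure M"]) auto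
  also have "\<dots> = (\<Sum>u\<in>U n. mm i n T c u)"
    unfolding mm_def by (rule P.measure_sum_fibers) (use sets_ev T in auto)
  finally show ?thesis by simp
qed

lemma mm_marg_right: assumes T: "finite T" and u: "u \<in> U m"
  shows "mm i m T c u = (\<Sum>v\<in>U n. mm i (m + n) T c (u @ v))"
proof -
  have "mm i m T c u = measure M {\<omega>\<in>space M. window x (i+m) n \<omega> \<in> U n \<and> (window x i m \<omega> = u \<and> (\<forall>p\<in>T. y p \<omega> = c p))}"
    unfolding mm_def using window_in_U by (intro arg_cong[where f="measure M"]) auto
  also have "\<dots> = (\<Sum>v\<in>U n. measure M {\<omega>\<in>space M. window x (i+m) n \<omega> = v \<and> (window x i m \<omega> = u \<and> (\<forall>p\<in>T. y p \<omega> = c p))})"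
  proof (rule P.measure_sum_fibers)
    fix v assume "v \<in> U n"
    have "{\<omega>\<in>space M. window x (i+m) n \<omega> = v \<and> (window x i m \<omega> = u \<and> (\<forall>p\<in>T. y p \<omega> = c p))}
       = {\<omega>\<in>space M. window x (i+m) n \<omega> = v} \<inter> {\<omega>\<in>space M. window x i m \<omega> = u \<and> (\<forall>p\<in>T. y p \<omega> = c p)}" by auto
    moreover have "{\<omega>\<in>space M. window x (i+m) n \<omega> = v} \<in> sets M" using pred_window by (simp add: pred_def)
    ultimately show "{\<omega>\<in>space M. window x (i+m) n \<omega> = v \<and> (window x i m \<omega> = u \<and> (\<forall>p\<in>T. y p \<omega> = c p))} \<in> sets M"
      using sets_ev[OF T] by auto
  qed simp
  also have "\<dots> = (\<Sum>v\<in>U n. mm i (m + n) T c (u @ v))"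
  proof (rule sum.cong[OF refl])
    fix v assume v: "v \<in> U n"
    have "window x i (m + n) \<omega> = u @ v \<longleftrightarrow> window x i m \<omega> = u \<and> window x (i+m) n \<omega> = v" for \<omega>
      using u by (simp add: window_append U_def append_eq_append_conv)
    thus "measure M {\<omega>\<in>space M. window x (i+m) n \<omega> = v \<and> (window x i m \<omega> = u \<and> (\<forall>p\<in>T. y p \<omega> = c p))}
      = mm i (m + n) T c (u @ v)" unfolding mm_def by (intro arg_cong[where f="measure M"]) auto
  qed
  finally show ?thesis .
qed

lemma mm_marg_left: assumes T: "finite T" and v: "v \<in> U n"
  shows "mm (i + m) n T c v = (\<Sum>u\<in>U m. mm i (m + n) T c (u @ v))"
proof -
  have "mm (i+m) n T c v = measure M {\<omega>\<in>space M. window x i m \<omega> \<in> U m \<and> (window x (i+m) n \<omega> = v \<and> (\<forall>p\<in>T. y p \<omega> = c p))}"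
    unfolding mm_def using window_in_U by (intro arg_cong[where f="measure M"]) auto
  also have "\<dots> = (\<Sum>u\<in>U m. measure M {\<omega>\<in>space M. window x i m \<omega> = u \<and> (window x (i+m) n \<omega> = v \<and> (\<forall>p\<in>T. y p \<omega> = c p))})"
  proof (rule P.measure_sum_fibers)
    fix u assume "u \<in> U m"
    have "{\<omega>\<in>space M. window x i m \<omega> = u \<and> (window x (i+m) n \<omega> = v \<and> (\<forall>p\<in>T. y p \<omega> = c p))}
       = {\<omega>\<in>space M. window x i m \<omega> = u} \<inter> {\<omega>\<in>space M. window x (i+m) n \<omega> = v \<and> (\<forall>p\<in>T. y p \<omega> = c p)}" by auto
    moreover have "{\<omega>\<in>space M. window x i m \<omega> = u} \<in> sets M" using pred_window by (simp add: pred_def)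
    ultimately show "{\<omega>\<in>space M. window x i m \<omega> = u \<and> (window x (i+m) n \<omega> = v \<and> (\<forall>p\<in>T. y p \<omega> = c p))} \<in> sets M"
      using sets_ev[OF T] by auto
  qed simp
  also have "\<dots> = (\<Sum>u\<in>U m. mm i (m + n) T c (u @ v))"
  proof (rule sum.cong[OF refl])
    fix u assume u: "u \<in> U m"
    have "window x i (m + n) \<omega> = u @ v \<longleftrightarrow> window x i m \<omega> = u \<and> window x (i+m) n \<omega> = v" for \<omega>
      using u by (simp add: window_append U_def append_eq_append_conv)
    thus "measure M {\<omega>\<in>space M. window x i m \<omega> = u \<and> (window x (i+m) n \<omega> = v \<and> (\<forall>p\<in>T. y p \<omega> = c p))}
      = mm i (m + n) T c (u @ v)" unfolding mm_def by (intro arg_cong[where f="measure M"]) auto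
  qed
  finally show ?thesis .
qed

lemma mm_split: assumes T1: "finite T1" and T2: "finite T2" "T2 \<subseteq> {p. prime p}" and disj: "T1 \<inter> T2 = {}"
  shows "mm i n T1 c u = (\<Sum>w\<in>Bv T2. mm i n (T1 \<union> T2) (merge T1 c w) u)"
proof -
  have "mm i n T1 c u = measure M {\<omega>\<in>space M. restrict (\<lambda>p. y p \<omega>) T2 \<in> Bv T2 \<and> (window x i n \<omega> = u \<and> (\<forall>p\<in>T1. y p \<omega> = c p))}"
    unfolding mm_def using restrict_y_in_Bv[OF _ T2(2)] by (intro arg_cong[where f="measure M"]) auto
  also have "\<dots> = (\<Sum>w\<in>Bv T2. measure M {\<omega>\<in>space M. restrict (\<lambda>p. y p \<omega>) T2 = w \<and> (window x i n \<omega> = u \<and> (\<forall>p\<in>T1. y p \<omega> = c p))})"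
  proof (rule P.measure_sum_fibers)
    fix w assume w: "w \<in> Bv T2"
    have "{\<omega>\<in>space M. restrict (\<lambda>p. y p \<omega>) T2 = w \<and> (window x i n \<omega> = u \<and> (\<forall>p\<in>T1. y p \<omega> = c p))}
      = {\<omega>\<in>space M. \<forall>p\<in>T2. y p \<omega> = w p} \<inter> {\<omega>\<in>space M. window x i n \<omega> = u \<and> (\<forall>p\<in>T1. y p \<omega> = c p)}"
      using restrict_eq_Bv[OF w] by auto
    thus "{\<omega>\<in>space M. restrict (\<lambda>p. y p \<omega>) T2 = w \<and> (window x i n \<omega> = u \<and> (\<forall>p\<in>T1. y p \<omega> = c p))} \<in> sets M"
      using sets_ev[OF T1] sets_yT[OF T2(1)] by auto
  qed (simp add: T2)
  also have "\<dots> = (\<Sum>w\<in>Bv T2. mm i n (T1 \<union> T2) (merge T1 c w) u)"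
  proof (rule sum.cong[OF refl])
    fix w assume w: "w \<in> Bv T2"
    show "measure M {\<omega>\<in>space M. restrict (\<lambda>p. y p \<omega>) T2 = w \<and> (window x i n \<omega> = u \<and> (\<forall>p\<in>T1. y p \<omega> = c p))}
      = mm i n (T1 \<union> T2) (merge T1 c w) u"
      unfolding mm_def using restrict_eq_Bv[OF w] by (intro arg_cong[where f="measure M"]) (use disj in \<open>auto simp: merge_def\<close>)
  qed
  finally show ?thesis .
qed

end

context setting begin

interpretation P: prob_space M by (rule M)

lemma primes_upto_prime: "primes_upto Q \<subseteq> {p. prime p}"
  by (auto simp: primes_upto_def)

lemma uniform_ev: assumes c: "c \<in> Bv (primes_upto Q)"
  shows "measure M {\<omega>\<in>space M. \<forall>p\<in>primes_upto Q. y p \<omega> = c p} = 1 / real (card (Bv (primes_upto Q)))"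
proof -
  have "\<forall>p\<in>primes_upto Q. c p < p" using c by (auto simp: Bv_def)
  thus ?thesis using uniform card_Bv[of "primes_upto Q"] by (simp add: of_nat_prod)
qed

lemma mod_shift_inj:
  fixes a b i p :: nat
  assumes eq: "(a + i) mod p = (b + i) mod p" and a: "a < p" and b: "b < p"
  shows "a = b"
proof (cases "a \<le> b")
  case True
  hence "p dvd (b + i) - (a + i)" using eq mod_eq_dvd_iff_nat[of "a + i" "b + i" p] by simp
  hence "p dvd b - a" by simp
  moreover have "b - a < p" using b by simp
  ultimately have "b - a = 0" using dvd_imp_le by (metis neq0_conv not_less)
  thus ?thesis using True by simp
next
  case False
  hence "p dvd (a + i) - (b + i)" using eq mod_eq_dvd_iff_nat[of "b + i" "a + i" p] by simp
  hence "p dvd a - b" by simp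
  moreover have "a - b < p" using a by simp
  ultimately have "a - b = 0" using dvd_imp_le by (metis neq0_conv not_less)
  thus ?thesis using False by simp
qed

lemma card_Bv_pos: "finite T \<Longrightarrow> T \<subseteq> {p. prime p} \<Longrightarrow> 0 < card (Bv T)"
  by (auto simp: card_Bv prime_gt_0_nat intro!: prod_pos)

lemma mm_le_card: assumes c: "c \<in> Bv (primes_upto Q)"
  shows "mm i n (primes_upto Q) c u * real (card (Bv (primes_upto Q))) \<le> 1"
proof -
  have pos: "0 < real (card (Bv (primes_upto Q)))" using card_Bv_pos[OF finite_primes_upto primes_upto_prime] by simp
  have "mm i n (primes_upto Q) c u \<le> 1 / real (card (Bv (primes_upto Q)))"
    using mm_le[OF finite_primes_upto, of i n Q c u] uniform_ev[OF c] by simp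
  thus ?thesis using pos by (simp add: field_simps)
qed

lemma hh_nonneg: "0 \<le> hh i n (primes_upto Q)"
proof -
  have "(\<Sum>c\<in>Bv (primes_upto Q). \<Sum>u\<in>U n. mm i n (primes_upto Q) c u * ln (mm i n (primes_upto Q) c u * real (card (Bv (primes_upto Q))))) \<le> 0"
  proof (intro sum_nonpos)
    fix c u assume c: "c \<in> Bv (primes_upto Q)"
    have "ln (mm i n (primes_upto Q) c u * real (card (Bv (primes_upto Q)))) \<le> 0"
    proof (cases "mm i n (primes_upto Q) c u * real (card (Bv (primes_upto Q))) = 0")
      case False
      hence "0 < mm i n (primes_upto Q) c u * real (card (Bv (primes_upto Q)))"
        using mm_nonneg[of i n "primes_upto Q" c u] by (simp add: less_le)
      thus ?thesis using mm_le_card[OF c] by simp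
    next
      case True thus ?thesis by (simp only: True) simp
    qed
    thus "mm i n (primes_upto Q) c u * ln (mm i n (primes_upto Q) c u * real (card (Bv (primes_upto Q)))) \<le> 0"
      using mm_nonneg by (intro mult_nonneg_nonpos) auto
  qed
  thus ?thesis by (simp add: hh_def)
qed

definition sh :: "nat \<Rightarrow> nat set \<Rightarrow> (nat \<Rightarrow> nat) \<Rightarrow> nat \<Rightarrow> nat" where
  "sh i T c = restrict (\<lambda>p. (c p + i) mod p) T"

lemma sh_bij: assumes T: "finite T" "T \<subseteq> {p. prime p}"
  shows "bij_betw (sh i T) (Bv T) (Bv T)"
proof -
  have into: "sh i T ` Bv T \<subseteq> Bv T"
    using T by (auto simp: sh_def Bv_def prime_gt_0_nat)
  have inj: "inj_on (sh i T) (Bv T)"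
  proof
    fix a b assume a: "a \<in> Bv T" and b: "b \<in> Bv T" and eq: "sh i T a = sh i T b"
    show "a = b"
    proof (rule PiE_ext[OF a[unfolded Bv_def] b[unfolded Bv_def]])
      fix p assume p: "p \<in> T"
      have "(a p + i) mod p = (b p + i) mod p" using eq p by (auto simp: sh_def fun_eq_iff restrict_def split: if_splits dest: spec[of _ p])
      moreover have "a p < p" "b p < p" using a b p by (auto simp: Bv_def)
      ultimately show "a p = b p" by (rule mod_shift_inj)
    qed
  qed
  have "sh i T ` Bv T = Bv T" using endo_inj_surj[OF finite_Bv[OF T(1)] into inj] .
  thus ?thesis using inj by (simp add: bij_betw_def)
qed

lemma mm_shift: assumes c: "c \<in> Bv (primes_upto Q)"
  shows "mm 0 n (primes_upto Q) c u = mm i n (primes_upto Q) (sh i (primes_upto Q) c) u"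
proof -
  let ?T = "primes_upto Q"
  have cb: "\<forall>p\<in>?T. c p < p" using c by (auto simp: Bv_def)
  have shc: "sh i ?T c \<in> Bv ?T" using sh_bij[OF finite_primes_upto primes_upto_prime] c
    by (auto simp: bij_betw_def)
  have cs: "cprob M (\<lambda>\<omega>. window x 0 n \<omega> \<in> {u}) (\<lambda>\<omega>. \<forall>p\<in>?T. y p \<omega> = c p)
      = cprob M (\<lambda>\<omega>. window x i n \<omega> \<in> {u}) (\<lambda>\<omega>. \<forall>p\<in>?T. y p \<omega> = (c p + i) mod p)"
    by (rule cond_stationary[OF cb])
  have ev: "(\<forall>p\<in>?T. y p \<omega> = (c p + i) mod p) \<longleftrightarrow> (\<forall>p\<in>?T. y p \<omega> = sh i ?T c p)" for \<omega>
    by (simp add: sh_def)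
  have d1: "measure M {\<omega>\<in>space M. \<forall>p\<in>?T. y p \<omega> = c p} = 1 / real (card (Bv ?T))" by (rule uniform_ev[OF c])
  have d2: "measure M {\<omega>\<in>space M. \<forall>p\<in>?T. y p \<omega> = sh i ?T c p} = 1 / real (card (Bv ?T))" by (rule uniform_ev[OF shc])
  have pos: "0 < real (card (Bv ?T))" using card_Bv_pos[OF finite_primes_upto primes_upto_prime] by simp
  from cs have "mm 0 n ?T c u / (1 / real (card (Bv ?T))) = mm i n ?T (sh i ?T c) u / (1 / real (card (Bv ?T)))"
    unfolding cprob_def mm_def ev d1 d2[symmetric] by simp
  thus ?thesis using pos by (cases "Bv ?T = {}") auto
qed

lemma hh_shift: "hh i n (primes_upto Q) = hh 0 n (primes_upto Q)"
proof -
  let ?T = "primes_upto Q"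
  let ?F = "\<lambda>i c. \<Sum>u\<in>U n. mm i n ?T c u * ln (mm i n ?T c u * real (card (Bv ?T)))"
  have "(\<Sum>c\<in>Bv ?T. ?F i c) = (\<Sum>c\<in>Bv ?T. ?F i (sh i ?T c))"
    using sum.reindex_bij_betw[OF sh_bij[OF finite_primes_upto primes_upto_prime], of "?F i" i] by simp
  also have "\<dots> = (\<Sum>c\<in>Bv ?T. ?F 0 c)"
    by (intro sum.cong refl) (simp add: mm_shift[symmetric])
  finally show ?thesis by (simp add: hh_def)
qed

lemma sum_U_append: "(\<Sum>w\<in>U (m + n). g w) = (\<Sum>u\<in>U m. \<Sum>v\<in>U n. g (u @ v))"
proof -
  have bij: "bij_betw (\<lambda>(u, v). u @ v) (U m \<times> U n) (U (m + n))"
  proof (rule bij_betwI[where g = "\<lambda>w. (take m w, drop m w)"])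
    show "(\<lambda>(u, v). u @ v) \<in> U m \<times> U n \<rightarrow> U (m + n)" by (auto simp: U_def)
    show "(\<lambda>w. (take m w, drop m w)) \<in> U (m + n) \<rightarrow> U m \<times> U n"
      by (auto simp: U_def dest: in_set_takeD in_set_dropD)
  qed (auto simp: U_def)
  have "(\<Sum>w\<in>U (m + n). g w) = (\<Sum>z\<in>U m \<times> U n. g ((\<lambda>(u, v). u @ v) z))"
    using sum.reindex_bij_betw[OF bij, of g] by simp
  also have "\<dots> = (\<Sum>u\<in>U m. \<Sum>v\<in>U n. g (u @ v))"
    by (simp add: sum.cartesian_product prod.case_distrib)
  finally show ?thesis .
qed

lemma hh_subadd: "hh 0 (m + n) (primes_upto Q) \<le> hh 0 m (primes_upto Q) + hh m n (primes_upto Q)"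
proof -
  let ?T = "primes_upto Q"
  define N where "N = real (card (Bv ?T))"
  have Npos: "0 < N" unfolding N_def using card_Bv_pos[OF finite_primes_upto primes_upto_prime] by simp
  have per: "- (\<Sum>w\<in>U (m+n). mm 0 (m+n) ?T c w * ln (mm 0 (m+n) ?T c w * N))
      \<le> - (\<Sum>u\<in>U m. mm 0 m ?T c u * ln (mm 0 m ?T c u * N)) - (\<Sum>v\<in>U n. mm m n ?T c v * ln (mm m n ?T c v * N))"
    if c: "c \<in> Bv ?T" for c
  proof -
    define r where "r u v = mm 0 (m+n) ?T c (u @ v) * N" for u v
    have tot: "(\<Sum>u\<in>U m. \<Sum>v\<in>U n. r u v) = 1"
    proof -
      have "(\<Sum>u\<in>U m. \<Sum>v\<in>U n. r u v) = (\<Sum>u\<in>U m. N * mm 0 m ?T c u)"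
      proof (intro sum.cong refl)
        fix u assume "u \<in> U m"
        thus "(\<Sum>v\<in>U n. r u v) = N * mm 0 m ?T c u"
          using mm_marg_right[OF finite_primes_upto \<open>u \<in> U m\<close>, where i=0 and c=c and n=n] by (simp add: r_def sum_distrib_left mult.commute)
      qed
      also have "\<dots> = N * (\<Sum>u\<in>U m. mm 0 m ?T c u)" by (simp add: sum_distrib_left)
      also have "\<dots> = 1" using mm_total[where T="primes_upto Q" and i=0 and n=m and c=c] uniform_ev[OF c] Npos c by (auto simp: N_def)
      finally show ?thesis .
    qed
    have r1: "(\<Sum>v\<in>U n. r u v) = mm 0 m ?T c u * N" if "u \<in> U m" for u
      using mm_marg_right[OF finite_primes_upto that, where i=0 and c=c and n=n] by (simp add: r_def sum_distrib_right)
    have r2: "(\<Sum>u\<in>U m. r u v) = mm m n ?T c v * N" if "v \<in> U n" for v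
      using mm_marg_left[OF finite_primes_upto that, where i=0 and c=c and m=m] by (simp add: r_def sum_distrib_right)
    have sa: "- (\<Sum>u\<in>U m. \<Sum>v\<in>U n. r u v * ln (r u v))
     \<le> - (\<Sum>u\<in>U m. (\<Sum>v\<in>U n. r u v) * ln (\<Sum>v\<in>U n. r u v))
        - (\<Sum>v\<in>U n. (\<Sum>u\<in>U m. r u v) * ln (\<Sum>u\<in>U m. r u v))"
      by (rule ent_subadd) (use tot Npos in \<open>auto simp: r_def mm_nonneg\<close>)
    have e1: "(\<Sum>u\<in>U m. (\<Sum>v\<in>U n. r u v) * ln (\<Sum>v\<in>U n. r u v)) = N * (\<Sum>u\<in>U m. mm 0 m ?T c u * ln (mm 0 m ?T c u * N))"
      by (simp add: r1 sum_distrib_left mult.assoc mult.left_commute)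
    have e2: "(\<Sum>v\<in>U n. (\<Sum>u\<in>U m. r u v) * ln (\<Sum>u\<in>U m. r u v)) = N * (\<Sum>v\<in>U n. mm m n ?T c v * ln (mm m n ?T c v * N))"
      by (simp add: r2 sum_distrib_left mult.assoc mult.left_commute)
    have e0: "(\<Sum>u\<in>U m. \<Sum>v\<in>U n. r u v * ln (r u v)) = N * (\<Sum>w\<in>U (m+n). mm 0 (m+n) ?T c w * ln (mm 0 (m+n) ?T c w * N))"
      by (simp add: sum_U_append r_def sum_distrib_left mult.assoc mult.left_commute)
    from sa[unfolded e0 e1 e2] have "N * (- (\<Sum>w\<in>U (m+n). mm 0 (m+n) ?T c w * ln (mm 0 (m+n) ?T c w * N)))
      \<le> N * (- (\<Sum>u\<in>U m. mm 0 m ?T c u * ln (mm 0 m ?T c u * N)) - (\<Sum>v\<in>U n. mm m n ?T c v * ln (mm m n ?T c v * N)))"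
      by (simp add: algebra_simps)
    thus ?thesis using Npos by (simp only: mult_le_cancel_left_pos)
  qed
  have "hh 0 (m + n) ?T = (\<Sum>c\<in>Bv ?T. - (\<Sum>w\<in>U (m+n). mm 0 (m+n) ?T c w * ln (mm 0 (m+n) ?T c w * N)))"
    by (simp add: hh_def N_def sum_negf)
  also have "\<dots> \<le> (\<Sum>c\<in>Bv ?T. - (\<Sum>u\<in>U m. mm 0 m ?T c u * ln (mm 0 m ?T c u * N)) - (\<Sum>v\<in>U n. mm m n ?T c v * ln (mm m n ?T c v * N)))"
    by (rule sum_mono) (rule per)
  also have "\<dots> = hh 0 m ?T + hh m n ?T"
    by (simp add: hh_def N_def sum_subtractf sum_negf)
  finally show ?thesis .
qed

lemma hh_double: "hh 0 (2 * n) (primes_upto Q) \<le> 2 * hh 0 n (primes_upto Q)"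
proof -
  have e: "hh 0 (2 * n) (primes_upto Q) = hh 0 (n + n) (primes_upto Q)" by (simp add: mult_2)
  have "hh n n (primes_upto Q) = hh 0 n (primes_upto Q)" by (rule hh_shift)
  thus ?thesis using e hh_subadd[of n n Q] by linarith
qed

end

context setting begin

interpretation P: prob_space M by (rule M)

lemma merge_bij: assumes T1: "finite T1" and T2: "finite T2" and disj: "T1 \<inter> T2 = {}"
  shows "bij_betw (\<lambda>(c, w). merge T1 c w) (Bv T1 \<times> Bv T2) (Bv (T1 \<union> T2))"
proof (rule bij_betwI[where g = "\<lambda>b. (restrict b T1, restrict b T2)"])
  show "(\<lambda>(c, w). merge T1 c w) \<in> Bv T1 \<times> Bv T2 \<rightarrow> Bv (T1 \<union> T2)"
    using disj by (auto simp: Bv_def merge_def PiE_def extensional_def Pi_def)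
  show "(\<lambda>b. (restrict b T1, restrict b T2)) \<in> Bv (T1 \<union> T2) \<rightarrow> Bv T1 \<times> Bv T2"
    by (auto simp: Bv_def)
  fix z assume "z \<in> Bv T1 \<times> Bv T2"
  then obtain c w where z: "z = (c, w)" "c \<in> Bv T1" "w \<in> Bv T2" by auto
  have "restrict (merge T1 c w) T1 = c" using z by (auto simp: Bv_def merge_def fun_eq_iff PiE_def extensional_def)
  moreover have "restrict (merge T1 c w) T2 = w" using z disj by (auto simp: Bv_def merge_def fun_eq_iff PiE_def extensional_def)
  ultimately show "(\<lambda>b. (restrict b T1, restrict b T2)) ((\<lambda>(c, w). merge T1 c w) z) = z" using z by simp
next
  fix b assume "b \<in> Bv (T1 \<union> T2)"
  thus "(\<lambda>(c, w). merge T1 c w) (restrict b T1, restrict b T2) = b"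
    by (auto simp: Bv_def merge_def fun_eq_iff PiE_def extensional_def)
qed

lemma sum_Bv_merge: assumes T1: "finite T1" and T2: "finite T2" and disj: "T1 \<inter> T2 = {}"
  shows "(\<Sum>b\<in>Bv (T1 \<union> T2). g b) = (\<Sum>c\<in>Bv T1. \<Sum>w\<in>Bv T2. g (merge T1 c w))"
proof -
  have "(\<Sum>b\<in>Bv (T1 \<union> T2). g b) = (\<Sum>z\<in>Bv T1 \<times> Bv T2. g ((\<lambda>(c, w). merge T1 c w) z))"
    using sum.reindex_bij_betw[OF merge_bij[OF assms], of g] by simp
  also have "\<dots> = (\<Sum>c\<in>Bv T1. \<Sum>w\<in>Bv T2. g (merge T1 c w))"
    by (simp add: sum.cartesian_product prod.case_distrib)
  finally show ?thesis .
qed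

lemma card_Bv_merge: assumes T1: "finite T1" and T2: "finite T2" and disj: "T1 \<inter> T2 = {}"
  shows "card (Bv (T1 \<union> T2)) = card (Bv T1) * card (Bv T2)"
  using bij_betw_same_card[OF merge_bij[OF assms]] by (simp add: card_cartesian_product)

lemma merge_restrict2: "w \<in> Bv T2 \<Longrightarrow> T1 \<inter> T2 = {} \<Longrightarrow> restrict (merge T1 c w) T2 = w"
  by (auto simp: Bv_def merge_def fun_eq_iff PiE_def extensional_def)

lemma pow2_split:
  "primes_upto (2 ^ Suc j) = primes_upto (2 ^ j) \<union> primes_between (2 ^ Suc j)"
  "primes_upto (2 ^ j) \<inter> primes_between (2 ^ Suc j) = {}"
  by (auto simp: primes_upto_def primes_between_def)

lemma primes_between_prime: "primes_between P \<subseteq> {p. prime p}"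
  by (auto simp: primes_between_def)

lemma merge_in: "c \<in> Bv T1 \<Longrightarrow> w \<in> Bv T2 \<Longrightarrow> finite T1 \<Longrightarrow> finite T2 \<Longrightarrow> T1 \<inter> T2 = {} \<Longrightarrow> merge T1 c w \<in> Bv (T1 \<union> T2)"
  using merge_bij[of T1 T2] by (auto simp: bij_betw_def)

lemma decrement:
  fixes j n :: nat and dev :: "'a list \<Rightarrow> (nat \<Rightarrow> nat) \<Rightarrow> bool" and \<rho>0 :: real
  assumes conc: "\<And>u. u \<in> U n \<Longrightarrow> real (card {w\<in>Bv (primes_between (2 ^ Suc j)). dev u w})
                     \<le> \<rho>0 * real (card (Bv (primes_between (2 ^ Suc j))))"
    and rho: "0 < \<rho>0"
  shows "0 \<le> hh 0 n (primes_upto (2 ^ j)) - hh 0 n (primes_upto (2 ^ Suc j))"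
    and "(\<Sum>b\<in>Bv (primes_upto (2 ^ Suc j)). \<Sum>u\<in>U n. if dev u (restrict b (primes_between (2 ^ Suc j))) then mm 0 n (primes_upto (2 ^ Suc j)) b u else 0) * ln (1 / \<rho>0)
      \<le> hh 0 n (primes_upto (2 ^ j)) - hh 0 n (primes_upto (2 ^ Suc j)) + 1"
proof -
  define T1 where "T1 = primes_upto (2 ^ j)"
  define T2 where "T2 = primes_between (2 ^ Suc j)"
  define T where "T = primes_upto (2 ^ Suc j)"
  have TT: "T = T1 \<union> T2" and disj: "T1 \<inter> T2 = {}" unfolding T_def T1_def T2_def by (rule pow2_split)+
  have fin: "finite T1" "finite T2" "finite T" by (simp_all add: T1_def T2_def T_def)
  have pr2: "T2 \<subseteq> {p. prime p}" unfolding T2_def by (rule primes_between_prime)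
  define N1 where "N1 = real (card (Bv T1))"
  define N2 where "N2 = real (card (Bv T2))"
  define N where "N = real (card (Bv T))"
  have N1pos: "0 < N1" unfolding N1_def T1_def using card_Bv_pos[OF finite_primes_upto primes_upto_prime] by simp
  have N2pos: "0 < N2" unfolding N2_def using card_Bv_pos[OF fin(2) pr2] by simp
  have NN: "N = N1 * N2" unfolding N_def N1_def N2_def TT using card_Bv_merge[OF fin(1,2) disj] by simp
  define \<nu> where "\<nu> c w u = mm 0 n T (merge T1 c w) u" for c w u
  define \<rho> where "\<rho> c u = mm 0 n T1 c u" for c u
  have \<rho>\<nu>: "\<rho> c u = (\<Sum>w\<in>Bv T2. \<nu> c w u)" for c u
    unfolding \<rho>_def \<nu>_def TT by (rule mm_split[OF fin(1,2) pr2 disj])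
  have \<nu>nn: "0 \<le> \<nu> c w u" for c w u by (simp add: \<nu>_def mm_nonneg)
  have \<nu>le\<rho>: "\<nu> c w u \<le> \<rho> c u" if "w \<in> Bv T2" for c w u
    unfolding \<rho>\<nu> using that fin \<nu>nn by (intro member_le_sum) auto
  have hT: "hh 0 n T = - (\<Sum>c\<in>Bv T1. \<Sum>w\<in>Bv T2. \<Sum>u\<in>U n. \<nu> c w u * ln (\<nu> c w u * N))"
    unfolding hh_def N_def \<nu>_def TT by (subst sum_Bv_merge[OF fin(1,2) disj]) simp
  have hT1: "hh 0 n T1 = - (\<Sum>c\<in>Bv T1. \<Sum>w\<in>Bv T2. \<Sum>u\<in>U n. \<nu> c w u * ln (\<rho> c u * N1))"
  proof -
    have "hh 0 n T1 = - (\<Sum>c\<in>Bv T1. \<Sum>u\<in>U n. \<rho> c u * ln (\<rho> c u * N1))"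
      by (simp add: hh_def \<rho>_def N1_def)
    also have "\<dots> = - (\<Sum>c\<in>Bv T1. \<Sum>u\<in>U n. \<Sum>w\<in>Bv T2. \<nu> c w u * ln (\<rho> c u * N1))"
      by (simp add: \<rho>\<nu>[of _ "_"] sum_distrib_right)
    also have "\<dots> = - (\<Sum>c\<in>Bv T1. \<Sum>w\<in>Bv T2. \<Sum>u\<in>U n. \<nu> c w u * ln (\<rho> c u * N1))"
      by (simp add: sum.swap[of _ "U n"])
    finally show ?thesis .
  qed
  have tm: "\<nu> c w u * ln (\<nu> c w u * N) - \<nu> c w u * ln (\<rho> c u * N1) = \<nu> c w u * ln (\<nu> c w u / (\<rho> c u / N2))"
    if w: "w \<in> Bv T2" for c w u
  proof (cases "\<nu> c w u = 0")
    case True thus ?thesis by simp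
  next
    case False
    hence pos: "0 < \<nu> c w u" using \<nu>nn[of c w u] by simp
    hence rpos: "0 < \<rho> c u" using \<nu>le\<rho>[OF w, of c u] by simp
    show ?thesis using pos rpos N1pos N2pos by (simp add: NN ln_mult ln_div algebra_simps)
  qed
  define D where "D = (\<Sum>c\<in>Bv T1. \<Sum>w\<in>Bv T2. \<Sum>u\<in>U n. \<nu> c w u * ln (\<nu> c w u / (\<rho> c u / N2)))"
  have Deq: "hh 0 n T1 - hh 0 n T = D"
  proof -
    have "hh 0 n T1 - hh 0 n T = (\<Sum>c\<in>Bv T1. \<Sum>w\<in>Bv T2. \<Sum>u\<in>U n. \<nu> c w u * ln (\<nu> c w u * N) - \<nu> c w u * ln (\<rho> c u * N1))"
      unfolding hT hT1 by (simp add: sum_subtractf)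
    also have "\<dots> = D" unfolding D_def by (intro sum.cong refl) (simp add: tm)
    finally show ?thesis .
  qed
  define K where "K = (Bv T1 \<times> Bv T2) \<times> U n"
  have finK: "finite K" unfolding K_def using fin by simp
  have flat: "(\<Sum>k\<in>K. (\<lambda>((c, w), u). h c w u) k) = (\<Sum>c\<in>Bv T1. \<Sum>w\<in>Bv T2. \<Sum>u\<in>U n. h c w u)" for h :: "_ \<Rightarrow> _ \<Rightarrow> _ \<Rightarrow> real"
    unfolding K_def by (simp add: sum.cartesian_product' case_prod_unfold)
  define vv where "vv = (\<lambda>((c, w), u). \<nu> c w u)"
  define pp where "pp = (\<lambda>((c, w::nat\<Rightarrow>nat), u). \<rho> c u / N2)"
  have sv: "sum vv K = 1"
  proof -
    have "sum vv K = (\<Sum>c\<in>Bv T1. \<Sum>w\<in>Bv T2. \<Sum>u\<in>U n. \<nu> c w u)" unfolding vv_def by (rule flat)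
    also have "\<dots> = (\<Sum>c\<in>Bv T1. \<Sum>w\<in>Bv T2. 1 / N)"
    proof (intro sum.cong refl)
      fix c w assume c: "c \<in> Bv T1" and w: "w \<in> Bv T2"
      have mb: "merge T1 c w \<in> Bv (primes_upto (2 ^ Suc j))" using merge_in[OF c w fin(1,2) disj] TT T_def by simp
      show "(\<Sum>u\<in>U n. \<nu> c w u) = 1 / N"
        unfolding \<nu>_def using mm_total[OF fin(3)] uniform_ev[OF mb] by (simp add: N_def T_def)
    qed
    also have "\<dots> = 1" using NN N1pos N2pos by (simp add: N1_def N2_def)
    finally show ?thesis .
  qed
  have sr: "(\<Sum>c\<in>Bv T1. \<Sum>u\<in>U n. \<rho> c u) = 1"
  proof -
    have "(\<Sum>c\<in>Bv T1. \<Sum>u\<in>U n. \<rho> c u) = (\<Sum>c\<in>Bv T1. 1 / N1)"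
    proof (intro sum.cong refl)
      fix c assume c: "c \<in> Bv T1"
      show "(\<Sum>u\<in>U n. \<rho> c u) = 1 / N1"
        unfolding \<rho>_def using mm_total[OF fin(1)] uniform_ev[of c "2^j"] c by (simp add: N1_def T1_def)
    qed
    also have "\<dots> = 1" using N1pos by (simp add: N1_def)
    finally show ?thesis .
  qed
  have sp: "sum pp K = 1"
  proof -
    have "sum pp K = (\<Sum>c\<in>Bv T1. \<Sum>w\<in>Bv T2. \<Sum>u\<in>U n. \<rho> c u / N2)" unfolding pp_def by (rule flat)
    also have "\<dots> = (\<Sum>c\<in>Bv T1. \<Sum>u\<in>U n. \<rho> c u)" using N2pos by (simp add: N2_def sum_divide_distrib[symmetric])
    also have "\<dots> = (\<Sum>c\<in>Bv T1. 1 / N1)"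
    proof (intro sum.cong refl)
      fix c assume c: "c \<in> Bv T1"
      show "(\<Sum>u\<in>U n. \<rho> c u) = 1 / N1"
        unfolding \<rho>_def using mm_total[OF fin(1)] uniform_ev[of c "2^j"] c by (simp add: N1_def T1_def)
    qed
    also have "\<dots> = 1" using N1pos by (simp add: N1_def)
    finally show ?thesis .
  qed
  have ppnn: "0 \<le> pp k" for k unfolding pp_def using N2pos by (auto simp: \<rho>_def mm_nonneg split: prod.splits)
  have vvnn: "0 \<le> vv k" for k unfolding vv_def by (auto simp: \<nu>nn split: prod.splits)
  have supp: "0 < pp k" if kK: "k \<in> K" and vpos: "0 < vv k" for k
  proof -
    obtain c w u where k: "k = ((c,w),u)" "w \<in> Bv T2" using kK by (auto simp: K_def)
    hence "0 < \<nu> c w u" using vpos by (simp add: vv_def)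
    hence "0 < \<rho> c u" using \<nu>le\<rho>[OF k(2), of c u] by simp
    thus ?thesis using k N2pos by (simp add: pp_def)
  qed
  have DK: "D = (\<Sum>k\<in>K. vv k * ln (vv k / pp k))"
    unfolding D_def vv_def pp_def using flat[of "\<lambda>c w u. \<nu> c w u * ln (\<nu> c w u / (\<rho> c u / N2))"] by (simp add: case_prod_unfold cong: if_cong)
  have g: "sum vv K - sum pp K \<le> (\<Sum>k\<in>K. vv k * ln (vv k / pp k))"
    by (rule gibbs[OF finK]) (use vvnn ppnn supp in auto)
  show "0 \<le> hh 0 n (primes_upto (2 ^ j)) - hh 0 n (primes_upto (2 ^ Suc j))"
    using g sv sp DK Deq by (simp add: T1_def T_def)
  define E where "E = (\<lambda>((c::nat\<Rightarrow>nat, w::nat\<Rightarrow>nat), u). dev u w)"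
  have pE: "(\<Sum>k\<in>K. if E k then pp k else 0) \<le> \<rho>0"
  proof -
    have "(\<Sum>k\<in>K. if E k then pp k else 0) = (\<Sum>c\<in>Bv T1. \<Sum>w\<in>Bv T2. \<Sum>u\<in>U n. if dev u w then \<rho> c u / N2 else 0)"
      unfolding E_def pp_def using flat[of "\<lambda>c w u. if dev u w then \<rho> c u / N2 else 0"] by (simp add: case_prod_unfold cong: if_cong)
    also have "\<dots> = (\<Sum>c\<in>Bv T1. \<Sum>u\<in>U n. \<rho> c u * (real (card {w\<in>Bv T2. dev u w}) / N2))"
    proof (intro sum.cong refl)
      fix c
      have "(\<Sum>w\<in>Bv T2. \<Sum>u\<in>U n. if dev u w then \<rho> c u / N2 else 0) = (\<Sum>u\<in>U n. \<Sum>w\<in>Bv T2. if dev u w then \<rho> c u / N2 else 0)"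
        by (rule sum.swap)
      also have "\<dots> = (\<Sum>u\<in>U n. \<rho> c u * (real (card {w\<in>Bv T2. dev u w}) / N2))"
      proof (intro sum.cong refl)
        fix u
        have "(\<Sum>w\<in>{w\<in>Bv T2. dev u w}. \<rho> c u / N2) = (\<Sum>w\<in>Bv T2. if dev u w then \<rho> c u / N2 else 0)"
          by (rule sum.inter_filter) (simp add: fin)
        from this[symmetric] show "(\<Sum>w\<in>Bv T2. if dev u w then \<rho> c u / N2 else 0) = \<rho> c u * (real (card {w\<in>Bv T2. dev u w}) / N2)" by simp
      qed
      finally show "(\<Sum>w\<in>Bv T2. \<Sum>u\<in>U n. if dev u w then \<rho> c u / N2 else 0) = (\<Sum>u\<in>U n. \<rho> c u * (real (card {w\<in>Bv T2. dev u w}) / N2))" .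
    qed
    also have "\<dots> \<le> (\<Sum>c\<in>Bv T1. \<Sum>u\<in>U n. \<rho> c u * \<rho>0)"
    proof (intro sum_mono mult_left_mono)
      fix u assume "u \<in> U n"
      thus "real (card {w\<in>Bv T2. dev u w}) / N2 \<le> \<rho>0" using conc N2pos by (simp add: N2_def T2_def field_simps)
    qed (simp add: \<rho>_def mm_nonneg)
    also have "\<dots> = \<rho>0 * (\<Sum>c\<in>Bv T1. \<Sum>u\<in>U n. \<rho> c u)" by (simp add: sum_distrib_left sum_distrib_right mult.commute)
    also have "(\<Sum>c\<in>Bv T1. \<Sum>u\<in>U n. \<rho> c u) = 1" by (rule sr)
    finally show ?thesis by simp
  qed
  have dv: "(\<Sum>k\<in>K. if E k then vv k else 0) * ln (1 / \<rho>0) \<le> (\<Sum>k\<in>K. vv k * ln (vv k / pp k)) + 1"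
    by (rule dv_ineq[OF finK _ _ _ sv _ rho pE]) (use vvnn ppnn supp sp in auto)
  have vE: "(\<Sum>k\<in>K. if E k then vv k else 0)
      = (\<Sum>b\<in>Bv T. \<Sum>u\<in>U n. if dev u (restrict b T2) then mm 0 n T b u else 0)"
  proof -
    have "(\<Sum>k\<in>K. if E k then vv k else 0) = (\<Sum>c\<in>Bv T1. \<Sum>w\<in>Bv T2. \<Sum>u\<in>U n. if dev u w then \<nu> c w u else 0)"
      unfolding E_def vv_def using flat[of "\<lambda>c w u. if dev u w then \<nu> c w u else 0"] by (simp add: case_prod_unfold cong: if_cong)
    also have "\<dots> = (\<Sum>c\<in>Bv T1. \<Sum>w\<in>Bv T2. \<Sum>u\<in>U n. if dev u (restrict (merge T1 c w) T2) then mm 0 n T (merge T1 c w) u else 0)"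
      by (intro sum.cong refl) (simp add: merge_restrict2[OF _ disj] \<nu>_def)
    also have "\<dots> = (\<Sum>b\<in>Bv T. \<Sum>u\<in>U n. if dev u (restrict b T2) then mm 0 n T b u else 0)"
      unfolding TT by (rule sum_Bv_merge[OF fin(1,2) disj, symmetric])
    finally show ?thesis .
  qed
  show "(\<Sum>b\<in>Bv (primes_upto (2 ^ Suc j)). \<Sum>u\<in>U n. if dev u (restrict b (primes_between (2 ^ Suc j))) then mm 0 n (primes_upto (2 ^ Suc j)) b u else 0) * ln (1 / \<rho>0)
      \<le> hh 0 n (primes_upto (2 ^ j)) - hh 0 n (primes_upto (2 ^ Suc j)) + 1"
  proof -
    have "(\<Sum>b\<in>Bv T. \<Sum>u\<in>U n. if dev u (restrict b T2) then mm 0 n T b u else 0) * ln (1 / \<rho>0) \<le> hh 0 n T1 - hh 0 n T + 1"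
      using dv vE DK Deq by simp
    thus ?thesis by (simp only: T_def T1_def T2_def)
  qed
qed

end

context setting begin

definition gg :: "nat \<Rightarrow> 'a list \<Rightarrow> complex" where
  "gg k u = (\<Sum>p\<in>primes_between (2^k). (\<Sum>r<p. f (2^k) p u r) / of_nat p) / of_nat (card (primes_between (2^k)))"

lemma conc_fP:
  assumes u: "u \<in> U (C * 2^k)" and lam: "0 < e" "e \<le> 1"
    and Npos: "0 < card (primes_between (2^k))"
  shows "real (card {w\<in>Bv (primes_between (2^k)). e < cmod (fP f (2^k) u w - gg k u)})
     \<le> 4 * exp (- real (card (primes_between (2^k))) * e\<^sup>2 / 64) * real (card (Bv (primes_between (2^k))))"
proof -
  define S where "S = primes_between (2^k)"
  define N where "N = real (card S)"
  have Sfin: "finite S" by (simp add: S_def)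
  have NposR: "0 < N" using Npos by (simp add: N_def S_def)
  define Z where "Z p r = f (2^k) p u r - (\<Sum>r'<p. f (2^k) p u r') / of_nat p" for p r
  have pS: "0 < p" if "p \<in> S" for p using that by (auto simp: S_def primes_between_def prime_gt_0_nat)
  have fb: "cmod (f (2^k) p u r) \<le> 1" if "p \<in> S" "r < p" for p r
    using f_bound[of p k u r] that u by (auto simp: S_def U_def)
  have avgb: "cmod ((\<Sum>r'<p. f (2^k) p u r') / of_nat p) \<le> 1" if p: "p \<in> S" for p
  proof -
    have "cmod (\<Sum>r'<p. f (2^k) p u r') \<le> (\<Sum>r'<p. cmod (f (2^k) p u r'))" by (rule norm_sum)
    also have "\<dots> \<le> (\<Sum>r'<p. 1)" using fb[OF p] by (intro sum_mono) auto
    finally have "cmod (\<Sum>r'<p. f (2^k) p u r') \<le> real p" by simp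
    thus ?thesis using pS[OF p] by (simp add: norm_divide field_simps)
  qed
  have Zb: "cmod (Z p r) \<le> 2" if "p \<in> S" "r < p" for p r
  proof -
    have "cmod (Z p r) \<le> cmod (f (2^k) p u r) + cmod ((\<Sum>r'<p. f (2^k) p u r') / of_nat p)"
      unfolding Z_def by (rule norm_triangle_ineq4)
    thus ?thesis using fb[OF that] avgb[OF that(1)] by linarith
  qed
  have Zsum: "(\<Sum>r<p. Z p r) = 0" if "p \<in> S" for p
    using pS[OF that] by (simp add: Z_def sum_subtractf)
  have diff: "fP f (2^k) u w - gg k u = (\<Sum>p\<in>S. Z p (w p)) / of_nat (card S)" for w
    by (simp add: fP_def gg_def S_def Z_def sum_subtractf diff_divide_distrib)
  define a :: "nat \<Rightarrow> nat \<Rightarrow> nat \<Rightarrow> real" where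
    "a i p r = (if i = 0 then Re (Z p r) else if i = 1 then - Re (Z p r) else if i = 2 then Im (Z p r) else - Im (Z p r))" for i p r
  have ab: "\<bar>a i p r\<bar> \<le> 2" if "p \<in> S" "r \<in> {..<p}" for i p r
    using Zb[of p r] that abs_Re_le_cmod[of "Z p r"] abs_Im_le_cmod[of "Z p r"] by (auto simp: a_def)
  have az: "sum (a i p) {..<p} = 0" if "p \<in> S" for i p
  proof -
    have "(\<Sum>r<p. Re (Z p r)) = 0" "(\<Sum>r<p. Im (Z p r)) = 0"
      using Zsum[OF that] by (simp_all flip: Re_sum Im_sum)
    thus ?thesis by (cases "i = 0"; cases "i = 1"; cases "i = 2") (simp_all add: a_def sum_negf)
  qed
  define t where "t = e / 16"
  have t: "0 \<le> t" "t * 2 \<le> 1" using lam by (auto simp: t_def)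
  have hb: "real (card {w \<in> PiE S (\<lambda>p. {..<p}). N * e / 2 \<le> (\<Sum>p\<in>S. a i p (w p))})
      \<le> exp (- N * e\<^sup>2 / 64) * real (card (PiE S (\<lambda>p. {..<p})))" for i
  proof -
    have "real (card {w \<in> PiE S (\<lambda>p. {..<p}). N * e / 2 \<le> (\<Sum>p\<in>S. a i p (w p))})
      \<le> real (card (PiE S (\<lambda>p. {..<p}))) * exp (real (card S) * t\<^sup>2 * 2\<^sup>2 - t * (N * e / 2))"
      by (rule hoeffding_sum[OF Sfin _ ab az t]) auto
    also have "real (card S) * t\<^sup>2 * 2\<^sup>2 - t * (N * e / 2) = - N * e\<^sup>2 / 64"
      by (simp add: t_def N_def power2_eq_square field_simps)
    finally show ?thesis by (simp add: mult.commute)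
  qed
  have sub: "{w\<in>Bv S. e < cmod (fP f (2^k) u w - gg k u)} \<subseteq>
      (\<Union>i\<in>{0,1,2,3::nat}. {w \<in> PiE S (\<lambda>p. {..<p}). N * e / 2 \<le> (\<Sum>p\<in>S. a i p (w p))})"
  proof
    fix w assume w: "w \<in> {w\<in>Bv S. e < cmod (fP f (2^k) u w - gg k u)}"
    define z where "z = (\<Sum>p\<in>S. Z p (w p))"
    have "e < cmod z / N" using w diff[of w] by (simp add: z_def N_def norm_divide)
    hence "N * e < cmod z" using NposR by (simp add: field_simps)
    also have "\<dots> \<le> \<bar>Re z\<bar> + \<bar>Im z\<bar>" by (rule cmod_le)
    finally have "N * e / 2 \<le> \<bar>Re z\<bar> \<or> N * e / 2 \<le> \<bar>Im z\<bar>" by linarith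
    moreover have "Re z = (\<Sum>p\<in>S. a 0 p (w p))" "- Re z = (\<Sum>p\<in>S. a 1 p (w p))"
       "Im z = (\<Sum>p\<in>S. a 2 p (w p))" "- Im z = (\<Sum>p\<in>S. a 3 p (w p))"
      by (simp_all add: z_def a_def Re_sum Im_sum sum_negf)
    ultimately have "\<exists>i\<in>{0,1,2,3::nat}. N * e / 2 \<le> (\<Sum>p\<in>S. a i p (w p))"
      by (cases "0 \<le> Re z"; cases "0 \<le> Im z") auto
    thus "w \<in> (\<Union>i\<in>{0,1,2,3::nat}. {w \<in> PiE S (\<lambda>p. {..<p}). N * e / 2 \<le> (\<Sum>p\<in>S. a i p (w p))})"
      using w by (auto simp: Bv_def)
  qed
  have finP: "finite (PiE S (\<lambda>p. {..<p}))" using Sfin by (intro finite_PiE) auto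
  have "real (card {w\<in>Bv S. e < cmod (fP f (2^k) u w - gg k u)})
      \<le> real (card (\<Union>i\<in>{0,1,2,3::nat}. {w \<in> PiE S (\<lambda>p. {..<p}). N * e / 2 \<le> (\<Sum>p\<in>S. a i p (w p))}))"
    using sub finP by (intro of_nat_mono card_mono) auto
  also have "\<dots> \<le> real (\<Sum>i\<in>{0,1,2,3::nat}. card {w \<in> PiE S (\<lambda>p. {..<p}). N * e / 2 \<le> (\<Sum>p\<in>S. a i p (w p))})"
    by (intro of_nat_mono card_UN_le) auto
  also have "\<dots> = (\<Sum>i\<in>{0,1,2,3::nat}. real (card {w \<in> PiE S (\<lambda>p. {..<p}). N * e / 2 \<le> (\<Sum>p\<in>S. a i p (w p))}))"
    by simp
  also have "\<dots> \<le> (\<Sum>i\<in>{0,1,2,3::nat}. exp (- N * e\<^sup>2 / 64) * real (card (PiE S (\<lambda>p. {..<p}))))"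
    by (intro sum_mono hb)
  also have "\<dots> = 4 * exp (- N * e\<^sup>2 / 64) * real (card (Bv S))" by (simp add: Bv_def)
  finally show ?thesis by (simp add: S_def N_def)
qed

end

context setting begin

interpretation P: prob_space M by (rule M)

lemma fP_cong: "(\<And>p. p \<in> primes_between P \<Longrightarrow> w p = w' p) \<Longrightarrow> fP f P u w = fP f P u w'"
  unfolding fP_def by (intro arg_cong2[where f="(/)"] sum.cong refl) auto

lemma fP_bound: assumes u: "u \<in> U (C * 2^k)" and w: "\<And>p. p \<in> primes_between (2^k) \<Longrightarrow> w p < p"
  shows "cmod (fP f (2^k) u w) \<le> 1"
proof (cases "card (primes_between (2^k)) = 0")
  case True thus ?thesis by (simp add: fP_def)
next
  case False
  have "cmod (\<Sum>p\<in>primes_between (2^k). f (2^k) p u (w p)) \<le> (\<Sum>p\<in>primes_between (2^k). cmod (f (2^k) p u (w p)))"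
    by (rule norm_sum)
  also have "\<dots> \<le> (\<Sum>p\<in>primes_between (2^k). 1)"
    using f_bound w u by (intro sum_mono) (auto simp: U_def)
  moreover have "0 < real (card (primes_between (2^k)))" using False by (simp only: of_nat_0_less_iff)
  ultimately show ?thesis by (simp add: fP_def norm_divide pos_divide_le_eq)
qed

lemma gg_bound: assumes u: "u \<in> U (C * 2^k)"
  shows "cmod (gg k u) \<le> 1"
proof (cases "card (primes_between (2^k)) = 0")
  case True thus ?thesis by (simp add: gg_def)
next
  case False
  have avgb: "cmod ((\<Sum>r<p. f (2^k) p u r) / of_nat p) \<le> 1" if p: "p \<in> primes_between (2^k)" for p
  proof -
    have pp: "0 < p" using p by (auto simp: primes_between_def prime_gt_0_nat)
    have "cmod (\<Sum>r<p. f (2^k) p u r) \<le> (\<Sum>r<p. cmod (f (2^k) p u r))" by (rule norm_sum)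
    also have "\<dots> \<le> (\<Sum>r<p. 1)" using f_bound p u by (intro sum_mono) (auto simp: U_def)
    finally have "cmod (\<Sum>r<p. f (2^k) p u r) \<le> real p" by simp
    thus ?thesis using pp by (simp add: norm_divide field_simps)
  qed
  have "cmod (\<Sum>p\<in>primes_between (2^k). (\<Sum>r<p. f (2^k) p u r) / of_nat p) \<le> (\<Sum>p\<in>primes_between (2^k). cmod ((\<Sum>r<p. f (2^k) p u r) / of_nat p))"
    by (rule norm_sum)
  also have "\<dots> \<le> (\<Sum>p\<in>primes_between (2^k). 1)" using avgb by (intro sum_mono) auto
  moreover have "0 < real (card (primes_between (2^k)))" using False by (simp only: of_nat_0_less_iff)
  ultimately show ?thesis by (simp add: gg_def norm_divide pos_divide_le_eq)
qed

lemma window0: "window x i 0 \<omega> = []"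
  by (simp add: window_def)

lemma prob_yT2: assumes w: "w \<in> Bv (primes_between (2 ^ Suc j))"
  shows "measure M {\<omega>\<in>space M. \<forall>p\<in>primes_between (2 ^ Suc j). y p \<omega> = w p} = 1 / real (card (Bv (primes_between (2 ^ Suc j))))"
proof -
  define T1 where "T1 = primes_upto (2 ^ j)"
  define T2 where "T2 = primes_between (2 ^ Suc j)"
  have TT: "T2 \<union> T1 = primes_upto (2 ^ Suc j)" and disj: "T2 \<inter> T1 = {}"
    unfolding T1_def T2_def using pow2_split[of j] by auto
  have fin: "finite T1" "finite T2" by (simp_all add: T1_def T2_def)
  have N1pos: "0 < card (Bv T1)" unfolding T1_def using card_Bv_pos[OF finite_primes_upto primes_upto_prime] by simp
  have N2pos: "0 < card (Bv T2)" unfolding T2_def using card_Bv_pos[OF finite_primes_between primes_between_prime] by simp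
  have cardN: "card (Bv (primes_upto (2 ^ Suc j))) = card (Bv T2) * card (Bv T1)"
    unfolding TT[symmetric] by (rule card_Bv_merge[OF fin(2,1) disj])
  have "measure M {\<omega>\<in>space M. \<forall>p\<in>T2. y p \<omega> = w p} = mm 0 0 T2 w []"
    by (simp add: mm_def window0)
  also have "\<dots> = (\<Sum>c\<in>Bv T1. mm 0 0 (T2 \<union> T1) (merge T2 w c) [])"
    by (rule mm_split[OF fin(2,1) _ disj]) (simp add: T1_def primes_upto_prime)
  also have "\<dots> = (\<Sum>c\<in>Bv T1. 1 / real (card (Bv (primes_upto (2 ^ Suc j)))))"
  proof (intro sum.cong refl)
    fix c assume c: "c \<in> Bv T1"
    have mb: "merge T2 w c \<in> Bv (primes_upto (2 ^ Suc j))"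
      using merge_in[OF w[folded T2_def] c fin(2,1) disj] TT by simp
    show "mm 0 0 (T2 \<union> T1) (merge T2 w c) [] = 1 / real (card (Bv (primes_upto (2 ^ Suc j))))"
      unfolding TT using uniform_ev[OF mb] by (simp add: mm_def window0)
  qed
  also have "\<dots> = 1 / real (card (Bv T2))" by (simp only: cardN) (use N1pos N2pos in simp)
  finally show ?thesis by (simp add: T2_def)
qed

lemma prob_window_total: "(\<Sum>u\<in>U n. measure M {\<omega>\<in>space M. window x 0 n \<omega> = u}) = 1"
  using mm_total[where T="{}" and n=n and i=0 and c=undefined] by (simp add: mm_def P.prob_space)

end

context setting begin

interpretation P: prob_space M by (rule M)

lemma expect_bound:
  fixes j :: nat and e :: real
  assumes e: "0 < e" "e \<le> 1" and Npos: "0 < card (primes_between (2 ^ Suc j))"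
    and L: "0 < real (card (primes_between (2 ^ Suc j))) * e\<^sup>2 / 64 - ln 4"
  shows "integral\<^sup>L M (\<lambda>\<omega>. cmod (fP f (2 ^ Suc j) (window x 0 (C * 2 ^ Suc j) \<omega>) (\<lambda>p. y p \<omega>)
                  - fP f (2 ^ Suc j) (window x 0 (C * 2 ^ Suc j) \<omega>) (W (2 ^ Suc j) \<omega>)))
     \<le> 2 * e + 2 * (hh 0 (C * 2 ^ Suc j) (primes_upto (2 ^ j)) - hh 0 (C * 2 ^ Suc j) (primes_upto (2 ^ Suc j)) + 1)
           / (real (card (primes_between (2 ^ Suc j))) * e\<^sup>2 / 64 - ln 4)
       + 8 * exp (- real (card (primes_between (2 ^ Suc j))) * e\<^sup>2 / 64)"
proof -
  define k where "k = Suc j"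
  define n where "n = C * 2 ^ k"
  define T where "T = primes_upto (2 ^ k)"
  define T2 where "T2 = primes_between (2 ^ k)"
  define Nk where "Nk = real (card T2)"
  define \<rho>0 where "\<rho>0 = 4 * exp (- Nk * e\<^sup>2 / 64)"
  define Lv where "Lv = Nk * e\<^sup>2 / 64 - ln 4"
  define Ik where "Ik = hh 0 n (primes_upto (2 ^ j)) - hh 0 n T"
  define dev where "dev u w = (e < cmod (fP f (2 ^ k) u w - gg k u))" for u w
  have finT: "finite T" "finite T2" by (simp_all add: T_def T2_def)
  have T2T: "T2 \<subseteq> T" by (auto simp: T_def T2_def primes_upto_def primes_between_def)
  have Lpos: "0 < Lv" using L by (simp add: Lv_def Nk_def T2_def k_def)
  have rho0: "0 < \<rho>0" by (simp add: \<rho>0_def)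
  have lnrho: "ln (1 / \<rho>0) = Lv" by (simp add: \<rho>0_def Lv_def ln_div ln_mult)
  have N2pos: "0 < real (card (Bv T2))" using card_Bv_pos[OF finT(2)] primes_between_prime by (simp add: T2_def)
  have conc: "real (card {w\<in>Bv (primes_between (2 ^ Suc j)). dev u w}) \<le> \<rho>0 * real (card (Bv (primes_between (2 ^ Suc j))))"
    if u: "u \<in> U n" for u
    using conc_fP[of u k e] u e Npos by (simp add: n_def dev_def \<rho>0_def Nk_def T2_def k_def)
  have dec: "(\<Sum>b\<in>Bv T. \<Sum>u\<in>U n. if dev u (restrict b T2) then mm 0 n T b u else 0) * ln (1 / \<rho>0) \<le> Ik + 1"
    using decrement(2)[of n j dev \<rho>0, OF conc rho0] by (simp only: T_def T2_def Ik_def k_def)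
  define \<nu>E where "\<nu>E = (\<Sum>b\<in>Bv T. \<Sum>u\<in>U n. if dev u (restrict b T2) then mm 0 n T b u else 0)"
  have \<nu>E: "\<nu>E \<le> (Ik + 1) / Lv" using dec Lpos by (simp add: \<nu>E_def lnrho pos_le_divide_eq)
  define h1 where "h1 = (\<lambda>(u, b). cmod (fP f (2 ^ k) u b - gg k u))"
  define V1 where "V1 \<omega> = (window x 0 n \<omega>, restrict (\<lambda>p. y p \<omega>) T)" for \<omega>
  define K1 where "K1 = U n \<times> Bv T"
  have finK1: "finite K1" using finT by (simp add: K1_def)
  have V1range: "V1 \<omega> \<in> K1" if "\<omega> \<in> space M" for \<omega>
  proof -
    have "restrict (\<lambda>p. y p \<omega>) T \<in> Bv T" unfolding T_def by (rule restrict_y_in_Bv[OF that primes_upto_prime])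
    thus ?thesis using window_in_U[OF that] by (simp add: V1_def K1_def)
  qed
  have V1fib: "{\<omega>\<in>space M. V1 \<omega> = z} = {\<omega>\<in>space M. window x 0 n \<omega> = fst z \<and> (\<forall>p\<in>T. y p \<omega> = snd z p)}"
    if "z \<in> K1" for z
    using that restrict_eq_Bv[of "snd z" T] by (auto simp: V1_def K1_def)
  have V1meas: "V1 \<in> M \<rightarrow>\<^sub>M count_space UNIV"
    by (rule measurable_countable_fibers[OF countable_finite[OF finK1] V1range]) (simp_all add: V1fib sets_ev finT)
  have int1: "integrable M (\<lambda>\<omega>. h1 (V1 \<omega>))" "integral\<^sup>L M (\<lambda>\<omega>. h1 (V1 \<omega>)) = (\<Sum>z\<in>K1. h1 z * measure M {\<omega>\<in>space M. V1 \<omega> = z})"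
    using P.integral_finite_rv[OF V1meas finK1, of h1] V1range by auto
  have h1b: "h1 (u, b) \<le> e + (if dev u (restrict b T2) then 2 else 0)" if "u \<in> U n" "b \<in> Bv T" for u b
  proof -
    have eqf: "fP f (2 ^ k) u b = fP f (2 ^ k) u (restrict b T2)" by (rule fP_cong) (simp add: T2_def)
    have bl: "restrict b T2 p < p" if "p \<in> primes_between (2 ^ k)" for p
      using \<open>b \<in> Bv T\<close> that T2T by (auto simp: Bv_def T2_def)
    have "cmod (fP f (2 ^ k) u (restrict b T2)) \<le> 1" using fP_bound[of u k] \<open>u \<in> U n\<close> bl by (simp add: n_def)
    moreover have "cmod (gg k u) \<le> 1" using gg_bound \<open>u \<in> U n\<close> by (simp add: n_def)
    ultimately have "cmod (fP f (2 ^ k) u (restrict b T2) - gg k u) \<le> 2" using norm_triangle_ineq4 by (smt (verit))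
    thus ?thesis using e by (simp add: h1_def eqf dev_def)
  qed
  have sumK1: "(\<Sum>z\<in>K1. g z) = (\<Sum>b\<in>Bv T. \<Sum>u\<in>U n. g (u, b))" for g :: "_ \<Rightarrow> real"
    unfolding K1_def by (simp add: sum.cartesian_product' sum.swap[of _ "U n"])
  have totmm: "(\<Sum>b\<in>Bv T. \<Sum>u\<in>U n. mm 0 n T b u) = 1"
  proof -
    have "(\<Sum>b\<in>Bv T. \<Sum>u\<in>U n. mm 0 n T b u) = (\<Sum>b\<in>Bv T. 1 / real (card (Bv T)))"
    proof (intro sum.cong refl)
      fix b assume b: "b \<in> Bv T"
      show "(\<Sum>u\<in>U n. mm 0 n T b u) = 1 / real (card (Bv T))"
        using mm_total[OF finT(1), where i=0 and n=n and c=b] uniform_ev[of b "2^k"] b by (simp add: T_def)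
    qed
    also have "\<dots> = 1" using card_Bv_pos[OF finT(1)] by (simp add: T_def primes_upto_prime) (metis card.empty less_irrefl)
    finally show ?thesis .
  qed
  have E1: "integral\<^sup>L M (\<lambda>\<omega>. h1 (V1 \<omega>)) \<le> e + 2 * \<nu>E"
  proof -
    have "integral\<^sup>L M (\<lambda>\<omega>. h1 (V1 \<omega>)) = (\<Sum>b\<in>Bv T. \<Sum>u\<in>U n. h1 (u, b) * mm 0 n T b u)"
      unfolding int1(2) sumK1 by (intro sum.cong refl) (simp add: V1fib K1_def mm_def)
    also have "\<dots> \<le> (\<Sum>b\<in>Bv T. \<Sum>u\<in>U n. e * mm 0 n T b u + 2 * (if dev u (restrict b T2) then mm 0 n T b u else 0))"
    proof (intro sum_mono)
      fix b u assume "b \<in> Bv T" "u \<in> U n"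
      have "h1 (u, b) * mm 0 n T b u \<le> (e + (if dev u (restrict b T2) then 2 else 0)) * mm 0 n T b u"
        by (intro mult_right_mono h1b mm_nonneg) fact+
      thus "h1 (u, b) * mm 0 n T b u \<le> e * mm 0 n T b u + 2 * (if dev u (restrict b T2) then mm 0 n T b u else 0)"
        by (simp add: algebra_simps split: if_splits)
    qed
    also have "\<dots> = e * (\<Sum>b\<in>Bv T. \<Sum>u\<in>U n. mm 0 n T b u) + 2 * \<nu>E"
      by (simp add: \<nu>E_def sum.distrib sum_distrib_left)
    finally show ?thesis using totmm by simp
  qed
  define h2 where "h2 = (\<lambda>(u, w). cmod (gg k u - fP f (2 ^ k) u w))"
  define V2 where "V2 \<omega> = (window x 0 n \<omega>, restrict (W (2 ^ k) \<omega>) T2)" for \<omega>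
  define K2 where "K2 = U n \<times> Bv T2"
  define K2' where "K2' = U n \<times> PiE T2 (\<lambda>_. UNIV :: nat set)"
  have finK2: "finite K2" using finT by (simp add: K2_def)
  have cK2': "countable K2'" unfolding K2'_def using finT by (intro countable_SIGMA countable_PiE countable_finite[OF finite_U]) (auto intro: countableI_type)
  have V2range: "V2 \<omega> \<in> K2'" if "\<omega> \<in> space M" for \<omega>
    using that window_in_U by (auto simp: V2_def K2'_def)
  have reW: "restrict (W (2 ^ k) \<omega>) T2 = w \<longleftrightarrow> (\<forall>p\<in>T2. W (2 ^ k) \<omega> p = w p)" if "w \<in> PiE T2 (\<lambda>_. UNIV)" for \<omega> w
    using that by (auto simp: PiE_def extensional_def restrict_def fun_eq_iff)
  have V2fib: "{\<omega>\<in>space M. V2 \<omega> = z} = {\<omega>\<in>space M. window x 0 n \<omega> = fst z \<and> (\<forall>p\<in>T2. W (2 ^ k) \<omega> p = snd z p)}"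
    if "z \<in> K2'" for z
    using that reW[of "snd z"] by (auto simp: V2_def K2'_def)
  have setsW: "{\<omega>\<in>space M. window x 0 n \<omega> = u \<and> (\<forall>p\<in>T2. W (2 ^ k) \<omega> p = w p)} \<in> sets M" for u w
    using pred_conjI[OF pred_window pred_WT[OF finT(2)]] by (simp add: pred_def)
  have V2meas: "V2 \<in> M \<rightarrow>\<^sub>M count_space UNIV"
    by (rule measurable_countable_fibers[OF cK2' V2range]) (simp_all add: V2fib setsW)
  have probW: "measure M {\<omega>\<in>space M. \<forall>p\<in>T2. W (2 ^ k) \<omega> p = w p} = 1 / real (card (Bv T2))"
    if w: "w \<in> Bv T2" for w
    using W_distr[of k w] prob_yT2[of w j] w by (simp add: T2_def k_def)
  have aeW: "AE \<omega> in M. V2 \<omega> \<in> K2"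
  proof -
    have "measure M {\<omega>\<in>space M. restrict (W (2 ^ k) \<omega>) T2 \<in> Bv T2 \<and> True}
        = (\<Sum>w\<in>Bv T2. measure M {\<omega>\<in>space M. restrict (W (2 ^ k) \<omega>) T2 = w \<and> True})"
    proof (rule P.measure_sum_fibers)
      fix w assume w: "w \<in> Bv T2"
      hence "w \<in> PiE T2 (\<lambda>_. UNIV)" by (auto simp: Bv_def)
      hence "{\<omega>\<in>space M. restrict (W (2 ^ k) \<omega>) T2 = w \<and> True} = {\<omega>\<in>space M. \<forall>p\<in>T2. W (2 ^ k) \<omega> p = w p}"
        using reW by auto
      thus "{\<omega>\<in>space M. restrict (W (2 ^ k) \<omega>) T2 = w \<and> True} \<in> sets M"
        using pred_WT[OF finT(2)] by (simp add: pred_def)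
    qed (simp add: finT)
    also have "\<dots> = (\<Sum>w\<in>Bv T2. 1 / real (card (Bv T2)))"
    proof (intro sum.cong refl)
      fix w assume w: "w \<in> Bv T2"
      hence "w \<in> PiE T2 (\<lambda>_. UNIV)" by (auto simp: Bv_def)
      hence "{\<omega>\<in>space M. restrict (W (2 ^ k) \<omega>) T2 = w \<and> True} = {\<omega>\<in>space M. \<forall>p\<in>T2. W (2 ^ k) \<omega> p = w p}"
        using reW by auto
      thus "measure M {\<omega>\<in>space M. restrict (W (2 ^ k) \<omega>) T2 = w \<and> True} = 1 / real (card (Bv T2))"
        using probW[OF w] by simp
    qed
    also have "\<dots> = 1" using N2pos by simp
    finally have "measure M {\<omega>\<in>space M. restrict (W (2 ^ k) \<omega>) T2 \<in> Bv T2} = 1" by simp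
    hence "AE \<omega> in M. \<omega> \<in> {\<omega>\<in>space M. restrict (W (2 ^ k) \<omega>) T2 \<in> Bv T2}" by (rule P.AE_prob_1)
    thus ?thesis by (rule AE_mp) (auto intro!: AE_I2 simp: V2_def K2_def window_in_U)
  qed
  have int2: "integrable M (\<lambda>\<omega>. h2 (V2 \<omega>))" "integral\<^sup>L M (\<lambda>\<omega>. h2 (V2 \<omega>)) = (\<Sum>z\<in>K2. h2 z * measure M {\<omega>\<in>space M. V2 \<omega> = z})"
    using P.integral_finite_rv[OF V2meas finK2 aeW, of h2] by auto
  have mV2: "measure M {\<omega>\<in>space M. V2 \<omega> = (u, w)} = measure M {\<omega>\<in>space M. window x 0 n \<omega> = u} / real (card (Bv T2))"
    if "u \<in> U n" "w \<in> Bv T2" for u w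
  proof -
    have w': "(u, w) \<in> K2'" using that by (auto simp: K2'_def Bv_def)
    have "measure M {\<omega>\<in>space M. V2 \<omega> = (u, w)} = measure M {\<omega>\<in>space M. window x 0 n \<omega> \<in> {u} \<and> (\<forall>p\<in>T2. W (2 ^ k) \<omega> p = w p)}"
      using V2fib[OF w'] by simp
    also have "\<dots> = measure M {\<omega>\<in>space M. window x 0 n \<omega> \<in> {u}} * measure M {\<omega>\<in>space M. \<forall>p\<in>T2. W (2 ^ k) \<omega> p = w p}"
      using W_indep[of k "{u}" w] by (simp add: n_def T2_def)
    finally show ?thesis using probW[OF that(2)] by simp
  qed
  have h2sum: "(\<Sum>w\<in>Bv T2. h2 (u, w)) \<le> (e + 2 * \<rho>0) * real (card (Bv T2))" if u: "u \<in> U n" for u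
  proof -
    have "(\<Sum>w\<in>Bv T2. h2 (u, w)) \<le> (\<Sum>w\<in>Bv T2. e + (if dev u w then 2 else 0))"
    proof (rule sum_mono)
      fix w assume w: "w \<in> Bv T2"
      have bl: "w p < p" if "p \<in> primes_between (2 ^ k)" for p using w that by (auto simp: Bv_def T2_def)
      have "cmod (fP f (2 ^ k) u w) \<le> 1" using fP_bound[of u k] u bl by (simp add: n_def)
      moreover have "cmod (gg k u) \<le> 1" using gg_bound u by (simp add: n_def)
      ultimately have "cmod (fP f (2 ^ k) u w - gg k u) \<le> 2" using norm_triangle_ineq4 by (smt (verit))
      thus "h2 (u, w) \<le> e + (if dev u w then 2 else 0)" using e by (simp add: h2_def dev_def norm_minus_commute)
    qed
    also have "\<dots> = e * real (card (Bv T2)) + 2 * real (card {w\<in>Bv T2. dev u w})"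
      using finT by (simp add: sum.distrib sum.If_cases Int_def)
    also have "\<dots> \<le> e * real (card (Bv T2)) + 2 * (\<rho>0 * real (card (Bv T2)))"
      using conc[OF u] by (simp add: T2_def k_def)
    finally show ?thesis by (simp add: algebra_simps)
  qed
  have E2: "integral\<^sup>L M (\<lambda>\<omega>. h2 (V2 \<omega>)) \<le> e + 2 * \<rho>0"
  proof -
    have "integral\<^sup>L M (\<lambda>\<omega>. h2 (V2 \<omega>)) = (\<Sum>u\<in>U n. measure M {\<omega>\<in>space M. window x 0 n \<omega> = u} * ((\<Sum>w\<in>Bv T2. h2 (u, w)) / real (card (Bv T2))))"
      unfolding int2(2) K2_def sum.cartesian_product'
    proof (intro sum.cong refl)
      fix u assume u: "u \<in> U n"
      have "(\<Sum>w\<in>Bv T2. h2 (u, w) * measure M {\<omega>\<in>space M. V2 \<omega> = (u, w)})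
          = (\<Sum>w\<in>Bv T2. measure M {\<omega>\<in>space M. window x 0 n \<omega> = u} * (h2 (u, w) / real (card (Bv T2))))"
        using u by (intro sum.cong refl) (simp add: mV2)
      also have "\<dots> = measure M {\<omega>\<in>space M. window x 0 n \<omega> = u} * ((\<Sum>w\<in>Bv T2. h2 (u, w)) / real (card (Bv T2)))"
        by (simp only: sum_distrib_left[symmetric] sum_divide_distrib[symmetric])
      finally show "(\<Sum>w\<in>Bv T2. h2 (u, w) * measure M {\<omega>\<in>space M. V2 \<omega> = (u, w)})
          = measure M {\<omega>\<in>space M. window x 0 n \<omega> = u} * ((\<Sum>w\<in>Bv T2. h2 (u, w)) / real (card (Bv T2)))" .
    qed
    also have "\<dots> \<le> (\<Sum>u\<in>U n. measure M {\<omega>\<in>space M. window x 0 n \<omega> = u} * (e + 2 * \<rho>0))"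
      using h2sum N2pos by (intro sum_mono mult_left_mono) (auto simp: pos_divide_le_eq)
    also have "\<dots> = e + 2 * \<rho>0" using prob_window_total[of n] by (simp add: sum_distrib_right[symmetric])
    finally show ?thesis .
  qed
  have pw: "cmod (fP f (2 ^ k) (window x 0 n \<omega>) (\<lambda>p. y p \<omega>) - fP f (2 ^ k) (window x 0 n \<omega>) (W (2 ^ k) \<omega>))
      \<le> h1 (V1 \<omega>) + h2 (V2 \<omega>)" for \<omega>
  proof -
    have a: "fP f (2 ^ k) (window x 0 n \<omega>) (\<lambda>p. y p \<omega>) = fP f (2 ^ k) (window x 0 n \<omega>) (restrict (\<lambda>p. y p \<omega>) T)"
      by (rule fP_cong) (use T2T in \<open>auto simp: T2_def\<close>)
    have b: "fP f (2 ^ k) (window x 0 n \<omega>) (W (2 ^ k) \<omega>) = fP f (2 ^ k) (window x 0 n \<omega>) (restrict (W (2 ^ k) \<omega>) T2)"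
      by (rule fP_cong) (auto simp: T2_def)
    show ?thesis unfolding a b h1_def h2_def V1_def V2_def using norm_triangle_ineq[of "fP f (2 ^ k) (window x 0 n \<omega>) (restrict (\<lambda>p. y p \<omega>) T) - gg k (window x 0 n \<omega>)" "gg k (window x 0 n \<omega>) - fP f (2 ^ k) (window x 0 n \<omega>) (restrict (W (2 ^ k) \<omega>) T2)"]
      by simp
  qed
  have "integral\<^sup>L M (\<lambda>\<omega>. cmod (fP f (2 ^ k) (window x 0 n \<omega>) (\<lambda>p. y p \<omega>) - fP f (2 ^ k) (window x 0 n \<omega>) (W (2 ^ k) \<omega>)))
      \<le> integral\<^sup>L M (\<lambda>\<omega>. h1 (V1 \<omega>) + h2 (V2 \<omega>))"
    by (rule integral_mono') (use int1(1) int2(1) pw in \<open>auto simp: h1_def h2_def split: prod.splits\<close>)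
  also have "\<dots> = integral\<^sup>L M (\<lambda>\<omega>. h1 (V1 \<omega>)) + integral\<^sup>L M (\<lambda>\<omega>. h2 (V2 \<omega>))"
    by (rule Bochner_Integration.integral_add[OF int1(1) int2(1)])
  also have "\<dots> \<le> (e + 2 * \<nu>E) + (e + 2 * \<rho>0)" using E1 E2 by simp
  also have "\<dots> \<le> 2 * e + 2 * (Ik + 1) / Lv + 8 * exp (- Nk * e\<^sup>2 / 64)"
  proof -
    have "2 * \<nu>E \<le> 2 * ((Ik + 1) / Lv)" using \<nu>E by linarith
    thus ?thesis by (simp add: \<rho>0_def)
  qed
  finally show ?thesis by (simp add: k_def n_def Ik_def T_def Lv_def Nk_def T2_def)
qed

end

context setting begin

interpretation P: prob_space M by (rule M)

definition Ik :: "nat \<Rightarrow> real" where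
  "Ik j = hh 0 (C * 2 ^ Suc j) (primes_upto (2 ^ j)) - hh 0 (C * 2 ^ Suc j) (primes_upto (2 ^ Suc j))"

definition aa :: "nat \<Rightarrow> real" where
  "aa j = hh 0 (C * 2 ^ Suc j) (primes_upto (2 ^ j)) / 2 ^ Suc j"

lemma Ik_nonneg: "0 \<le> Ik j"
proof -
  have "0 \<le> hh 0 (C * 2 ^ Suc j) (primes_upto (2 ^ j)) - hh 0 (C * 2 ^ Suc j) (primes_upto (2 ^ Suc j))"
    by (rule decrement(1)[of "C * 2 ^ Suc j" j "\<lambda>_ _. False" 1]) simp_all
  thus ?thesis by (simp add: Ik_def)
qed

lemma aa_step: "aa (Suc J) \<le> aa J - Ik J / 2 ^ Suc J"
proof -
  have e: "C * 2 ^ Suc (Suc J) = 2 * (C * 2 ^ Suc J)" by simp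
  have "hh 0 (C * 2 ^ Suc (Suc J)) (primes_upto (2 ^ Suc J)) \<le> 2 * hh 0 (C * 2 ^ Suc J) (primes_upto (2 ^ Suc J))"
    unfolding e by (rule hh_double)
  hence "aa (Suc J) \<le> 2 * hh 0 (C * 2 ^ Suc J) (primes_upto (2 ^ Suc J)) / 2 ^ Suc (Suc J)"
    unfolding aa_def by (intro divide_right_mono) auto
  also have "\<dots> = hh 0 (C * 2 ^ Suc J) (primes_upto (2 ^ Suc J)) / 2 ^ Suc J" by simp
  also have "\<dots> = aa J - Ik J / 2 ^ Suc J" by (simp add: aa_def Ik_def diff_divide_distrib)
  finally show ?thesis .
qed

lemma Ik_sum: "(\<Sum>j<J. Ik j / 2 ^ Suc j) \<le> aa 0"
proof -
  have "aa J + (\<Sum>j<J. Ik j / 2 ^ Suc j) \<le> aa 0"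
  proof (induction J)
    case 0 thus ?case by simp
  next
    case (Suc J) thus ?case using aa_step[of J] by simp
  qed
  moreover have "0 \<le> aa J" unfolding aa_def using hh_nonneg by simp
  ultimately show ?thesis by simp
qed

lemma N_unbounded: "\<exists>J. B' \<le> (\<Sum>j<J. real (card (primes_between (2 ^ Suc j))) / 2 ^ Suc j)"
proof -
  obtain K where "B' \<le> (\<Sum>k\<in>{1..K}. real (card (primes_between (2 ^ k))) / 2 ^ k)"
    using dyadic_unbounded by blast
  thus ?thesis by (auto simp: sum.atLeast1_atMost_eq)
qed

theorem main:
  "liminf (\<lambda>k::nat. ereal (integral\<^sup>L M (\<lambda>\<omega>.
            cmod (fP f (2^k) (window x 0 (C * 2^k) \<omega>) (\<lambda>p. y p \<omega>)
                  - fP f (2^k) (window x 0 (C * 2^k) \<omega>) (W (2^k) \<omega>))))) = 0"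
proof (rule liminf_zero_crit)
  fix k show "0 \<le> integral\<^sup>L M (\<lambda>\<omega>. cmod (fP f (2^k) (window x 0 (C * 2^k) \<omega>) (\<lambda>p. y p \<omega>)
                  - fP f (2^k) (window x 0 (C * 2^k) \<omega>) (W (2^k) \<omega>)))"
    by (rule Bochner_Integration.integral_nonneg) simp
next
  fix d :: real and K0 :: nat assume d: "0 < d"
  define d' where "d' = min d 1"
  have d': "0 < d'" "d' \<le> 1" "d' \<le> d" using d by (auto simp: d'_def)
  define e where "e = d' / 8"
  have epos: "0 < e" "e \<le> 1" using d' by (auto simp: e_def)
  define \<epsilon> where "\<epsilon> = e\<^sup>2 * d' / 2048"
  have eps: "0 < \<epsilon>" using epos d' by (simp add: \<epsilon>_def)
  define N0 where "N0 = max (384 / e\<^sup>2) (2048 / (e\<^sup>2 * d'))"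
  have N0pos: "0 < N0" using epos d' by (simp add: N0_def less_max_iff_disj)
  have sel: "\<exists>j\<ge>K0. Ik j \<le> \<epsilon> * real (card (primes_between (2 ^ Suc j))) \<and> N0 \<le> real (card (primes_between (2 ^ Suc j)))"
    by (rule selection[OF Ik_nonneg _ Ik_sum N_unbounded eps]) simp
  then obtain j where j: "j \<ge> K0" "Ik j \<le> \<epsilon> * real (card (primes_between (2 ^ Suc j)))"
      "N0 \<le> real (card (primes_between (2 ^ Suc j)))" by blast
  define Nj where "Nj = real (card (primes_between (2 ^ Suc j)))"
  have Npos: "0 < card (primes_between (2 ^ Suc j))" using j(3) N0pos by simp
  have I': "Ik j \<le> e\<^sup>2 * d' / 2048 * Nj" using j(2) by (simp add: \<epsilon>_def Nj_def)
  have N1: "384 / e\<^sup>2 \<le> Nj" and N2: "2048 / (e\<^sup>2 * d') \<le> Nj" using j(3) by (auto simp: N0_def Nj_def)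
  note fn = final_num[OF d'(1,2) e_def I' N1 N2]
  have "integral\<^sup>L M (\<lambda>\<omega>. cmod (fP f (2 ^ Suc j) (window x 0 (C * 2 ^ Suc j) \<omega>) (\<lambda>p. y p \<omega>)
                  - fP f (2 ^ Suc j) (window x 0 (C * 2 ^ Suc j) \<omega>) (W (2 ^ Suc j) \<omega>)))
     \<le> 2 * e + 2 * (Ik j + 1) / (Nj * e\<^sup>2 / 64 - ln 4) + 8 * exp (- Nj * e\<^sup>2 / 64)"
    using expect_bound[OF epos Npos] fn(1) by (simp add: Ik_def Nj_def)
  also have "\<dots> < d'" by (rule fn(2))
  finally show "\<exists>k\<ge>K0. integral\<^sup>L M (\<lambda>\<omega>. cmod (fP f (2^k) (window x 0 (C * 2^k) \<omega>) (\<lambda>p. y p \<omega>)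
                  - fP f (2^k) (window x 0 (C * 2^k) \<omega>) (W (2^k) \<omega>))) < d"
    using j(1) d'(3) by (intro exI[of _ "Suc j"]) auto
qed

end

theorem theorem2p14:
  fixes M :: "'w measure"
    and A :: "'a set" and C :: nat
    and x :: "nat \<Rightarrow> 'w \<Rightarrow> 'a"
    and y :: "nat \<Rightarrow> 'w \<Rightarrow> nat"
    and f :: "nat \<Rightarrow> nat \<Rightarrow> 'a list \<Rightarrow> nat \<Rightarrow> complex"
    and W :: "nat \<Rightarrow> 'w \<Rightarrow> nat \<Rightarrow> nat"
  assumes M: "prob_space M"
    and A: "finite A"
    and x_meas: "\<And>i. x i \<in> M \<rightarrow>\<^sub>M count_space UNIV"
    and x_range: "\<And>i \<omega>. i \<ge> 1 \<Longrightarrow> \<omega> \<in> space M \<Longrightarrow> x i \<omega> \<in> A"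
    and y_meas: "\<And>p. y p \<in> M \<rightarrow>\<^sub>M count_space UNIV"
    and y_range: "\<And>p \<omega>. prime p \<Longrightarrow> \<omega> \<in> space M \<Longrightarrow> y p \<omega> < p"
    and uniform: "\<And>P b. (\<forall>p\<in>primes_upto P. b p < p) \<Longrightarrow>
        measure M {\<omega>\<in>space M. \<forall>p\<in>primes_upto P. y p \<omega> = b p}
          = 1 / real (\<Prod>p\<in>primes_upto P. p)"
    and stationary: "\<And>i m (S :: 'a list set).
        measure M {\<omega>\<in>space M. window x 0 m \<omega> \<in> S}
          = measure M {\<omega>\<in>space M. window x i m \<omega> \<in> S}"
    and cond_stationary: "\<And>P b i m (S :: 'a list set). (\<forall>p\<in>primes_upto P. b p < p) \<Longrightarrow>
        cprob M (\<lambda>\<omega>. window x 0 m \<omega> \<in> S) (\<lambda>\<omega>. \<forall>p\<in>primes_upto P. y p \<omega> = b p)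
          = cprob M (\<lambda>\<omega>. window x i m \<omega> \<in> S)
              (\<lambda>\<omega>. \<forall>p\<in>primes_upto P. y p \<omega> = (b p + i) mod p)"
    and f_bound: "\<And>k p X r. p \<in> primes_between (2^k) \<Longrightarrow> length X = C * 2^k \<Longrightarrow>
        set X \<subseteq> A \<Longrightarrow> r < p \<Longrightarrow> cmod (f (2^k) p X r) \<le> 1"
    and W_meas: "\<And>k p. (\<lambda>\<omega>. W (2^k) \<omega> p) \<in> M \<rightarrow>\<^sub>M count_space UNIV"
    and W_distr: "\<And>k b.
        measure M {\<omega>\<in>space M. \<forall>p\<in>primes_between (2^k). W (2^k) \<omega> p = b p}
          = measure M {\<omega>\<in>space M. \<forall>p\<in>primes_between (2^k). y p \<omega> = b p}"
    and W_indep: "\<And>k b (S :: 'a list set).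
        measure M {\<omega>\<in>space M. window x 0 (C * 2^k) \<omega> \<in> S
                      \<and> (\<forall>p\<in>primes_between (2^k). W (2^k) \<omega> p = b p)}
          = measure M {\<omega>\<in>space M. window x 0 (C * 2^k) \<omega> \<in> S}
            * measure M {\<omega>\<in>space M. \<forall>p\<in>primes_between (2^k). W (2^k) \<omega> p = b p}"
  shows "liminf (\<lambda>k::nat. ereal (integral\<^sup>L M (\<lambda>\<omega>.
            cmod (fP f (2^k) (window x 0 (C * 2^k) \<omega>) (\<lambda>p. y p \<omega>)
                  - fP f (2^k) (window x 0 (C * 2^k) \<omega>) (W (2^k) \<omega>))))) = 0"
proof -
  interpret setting M A C x y f W
    by (rule setting.intro[where M=M and A=A and C=C and x=x and y=y and f=f and W=W, OF M A x_meas x_range y_meas y_range uniform cond_stationary f_bound W_meas W_distr W_indep])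
  show ?thesis by (rule main)
qed

end
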